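(* Let $\ell\ge1$, $2n=\ell(\ell+1)$, $c>0$ and $k\ge1$ with $2k\le\ell+1$. Let $B_1,\dots,B_{\ell+1}$ and $C_1,\dots,C_{\ell+1}$ be two partitions of $[2n]$ into sets of size $\ell$, and let $O\in O(2n)$ satisfy: $O_{v,j}=0$ unless $v\in B_i$ and $j\in C_i$ for some $i$, and $|O_{v,j}|\ge c\,\ell^{-1/2}$ whenever $v\in B_i$, $j\in C_i$. Let $\mathcal M$ be a perfect matching of $[2n]$ in which every edge joins two different sets $B_i\neq B_{i'}$ and which is sparsely arranged: for every $i\neq i'$ some edge of $\mathcal M$ has one endpoint in $B_i$ and the other in $B_{i'}$. Then for every $S\in\mathcal S_{2k}$ whose $2k$ elements lie in $2k$ pairwise distinct sets $C_i$, there exist $k$ distinct edges $M_1,\dots,M_k\in\mathcal M$ such that, with $R=M_1\cup\dots\cup M_k$, the submatrix $O_{R,S}$ is monomial and $|\det(O_{R,S})|\ge c^{2k}\ell^{-k}$. Consequently, if $\pi\in S_{2n}$ maps every edge of $\mathcal M$ onto an element of $\mathcal D_2$ and $P_\pi$ is the permutation matrix with $(P_\pi O)_{\pi(v),j}=O_{v,j}$, then $\pi(R)\in\mathcal D_{2k}$ and $\mathsf G^{P_\pi O}$ jointly measures $\mathsf M_S^\eta$ with $\eta=|\det((P_\pi O)_{\pi(R),S})|\ge c^{2k}\ell^{-k}=\Omega(n^{-k/2})$.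
   Context: $\mathcal S_{m}=\{S\subseteq[2n]:|S|=m\}$; $O_{R,S}$ is the submatrix of $O$ with rows $R$ and columns $S$; a square matrix is monomial if each row and column has exactly one nonzero entry. $\mathcal D_2=\{\{2j-1,2j\}:j\in[n]\}$, $\mathcal D_{2k}$ = unions of $k$ distinct elements of $\mathcal D_2$. With Majorana operators $\gamma_j$ on $(\mathbb C^2)^{\otimes n}$ and $\gamma_S=i^{\binom m2}\gamma_{j_1}\cdots\gamma_{j_m}$, $x_S=(-1)^{|X||S|-|S\cap X|}$: $\mathsf G^O(\mathbf q,X)=(2^{2n})^{n-1}\prod_{R\in\mathcal D_2}2^{-2n-1}\big(I+q_R\sum_{S\in\mathcal S_2}x_S\det(O_{R,S})\gamma_S\big)$, $\mathbf q\in\{\pm1\}^n$, $X\subseteq[2n]$; $\mathsf M^\eta_S(e)=\frac12(I+e\eta\gamma_S)$; "jointly measures" means $\mathsf M^\eta_S$ is obtained from $\mathsf G^O$ by a classical stochastic post-processing of outcomes. *)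

theory Defs
  imports Complex_Main "Jordan_Normal_Form.Determinant" "HOL-Combinatorics.Permutations"
begin

definition idx2 :: "nat \<Rightarrow> nat set" where
  "idx2 n = {1..2*n}"

definition subsets_card :: "nat \<Rightarrow> nat \<Rightarrow> nat set set" where
  "subsets_card n m = {S. S \<subseteq> idx2 n \<and> card S = m}"

definition D2 :: "nat \<Rightarrow> nat set set" where
  "D2 n = {{2*j - 1, 2*j} | j. j \<in> {1..n}}"

definition D2k :: "nat \<Rightarrow> nat \<Rightarrow> nat set set" where
  "D2k n k = {\<Union>F | F. F \<subseteq> D2 n \<and> card F = k}"

(* real 2n x 2n matrices are functions on indices [2n] x [2n] *)
definition orthogonal_2n :: "nat \<Rightarrow> (nat \<Rightarrow> nat \<Rightarrow> real) \<Rightarrow> bool" where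
  "orthogonal_2n n Om \<longleftrightarrow>
     (\<forall>j\<in>idx2 n. \<forall>j'\<in>idx2 n. (\<Sum>v\<in>idx2 n. Om v j * Om v j') = (if j = j' then 1 else 0)) \<and>
     (\<forall>v\<in>idx2 n. \<forall>v'\<in>idx2 n. (\<Sum>j\<in>idx2 n. Om v j * Om v' j) = (if v = v' then 1 else 0))"

definition submat_RS :: "(nat \<Rightarrow> nat \<Rightarrow> real) \<Rightarrow> nat set \<Rightarrow> nat set \<Rightarrow> real mat" where
  "submat_RS Om R S = mat (card R) (card S)
     (\<lambda>(a, b). Om (sorted_list_of_set R ! a) (sorted_list_of_set S ! b))"

definition monomial_sub :: "(nat \<Rightarrow> nat \<Rightarrow> real) \<Rightarrow> nat set \<Rightarrow> nat set \<Rightarrow> bool" where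
  "monomial_sub Om R S \<longleftrightarrow> card R = card S \<and>
     (\<forall>r\<in>R. \<exists>!s. s \<in> S \<and> Om r s \<noteq> 0) \<and> (\<forall>s\<in>S. \<exists>!r. r \<in> R \<and> Om r s \<noteq> 0)"

definition partition_l :: "nat \<Rightarrow> nat \<Rightarrow> (nat \<Rightarrow> nat set) \<Rightarrow> bool" where
  "partition_l n l B \<longleftrightarrow>
     (\<forall>i\<in>{1..l+1}. B i \<subseteq> idx2 n \<and> card (B i) = l) \<and>
     (\<forall>i\<in>{1..l+1}. \<forall>i'\<in>{1..l+1}. i \<noteq> i' \<longrightarrow> B i \<inter> B i' = {}) \<and>
     (\<Union>i\<in>{1..l+1}. B i) = idx2 n"

definition perfect_matching :: "nat \<Rightarrow> nat set set \<Rightarrow> bool" where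
  "perfect_matching n M \<longleftrightarrow>
     (\<forall>e\<in>M. e \<subseteq> idx2 n \<and> card e = 2) \<and> (\<forall>v\<in>idx2 n. \<exists>!e. e \<in> M \<and> v \<in> e)"

definition perm_rows :: "(nat \<Rightarrow> nat) \<Rightarrow> (nat \<Rightarrow> nat \<Rightarrow> real) \<Rightarrow> nat \<Rightarrow> nat \<Rightarrow> real" where
  "perm_rows \<pi> Om = (\<lambda>w j. Om (inv_into UNIV \<pi> w) j)"

(* Majorana operators on (C^2)^{\<otimes> n} via Jordan-Wigner:
   gamma_{2j-1} = Z..Z X_j, gamma_{2j} = Z..Z Y_j (qubit j <-> bit j-1 of the basis index) *)
definition maj :: "nat \<Rightarrow> nat \<Rightarrow> complex mat" where
  "maj n m = mat (2^n) (2^n) (\<lambda>(a, b).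
     (let q = (m - 1) div 2;
          par = (-1::complex) ^ card {l. l < q \<and> bit b l}
      in if a = flip_bit q b
         then (if odd m then par else \<i> * (if bit b q then -1 else 1) * par)
         else 0))"

definition gammaS :: "nat \<Rightarrow> nat set \<Rightarrow> complex mat" where
  "gammaS n S = (\<i> ^ (card S choose 2)) \<cdot>\<^sub>m
     foldr (*) (map (maj n) (sorted_list_of_set S)) (1\<^sub>m (2^n))"

definition xS :: "nat set \<Rightarrow> nat set \<Rightarrow> real" where
  "xS X S = (-1) ^ (card X * card S - card (S \<inter> X))"

definition G_factor :: "nat \<Rightarrow> (nat \<Rightarrow> nat \<Rightarrow> real) \<Rightarrow> (nat \<Rightarrow> int) \<Rightarrow> nat set \<Rightarrow> nat \<Rightarrow> complex mat" where
  "G_factor n Om q X j = complex_of_real (1 / 2 ^ (2*n + 1)) \<cdot>\<^sub>m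
     (1\<^sub>m (2^n) + of_int (q j) \<cdot>\<^sub>m
        mat (2^n) (2^n) (\<lambda>(a, b). \<Sum>S\<in>subsets_card n 2.
           complex_of_real (xS X S * det (submat_RS Om {2*j - 1, 2*j} S)) * gammaS n S $$ (a, b)))"

(* G^Om(q,X); q \<in> {+-1}^n indexed by j \<in> [n] (q_R with R = {2j-1,2j}) *)
definition G_op :: "nat \<Rightarrow> (nat \<Rightarrow> nat \<Rightarrow> real) \<Rightarrow> (nat \<Rightarrow> int) \<Rightarrow> nat set \<Rightarrow> complex mat" where
  "G_op n Om q X = complex_of_real ((2 ^ (2*n)) ^ (n - 1)) \<cdot>\<^sub>m
     foldr (*) (map (G_factor n Om q X) [1..<n+1]) (1\<^sub>m (2^n))"

definition q_set :: "nat \<Rightarrow> (nat \<Rightarrow> int) set" where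
  "q_set n = PiE {1..n} (\<lambda>_. {-1, 1})"

definition M_op :: "nat \<Rightarrow> real \<Rightarrow> nat set \<Rightarrow> int \<Rightarrow> complex mat" where
  "M_op n \<eta> S e = complex_of_real (1/2) \<cdot>\<^sub>m
     (1\<^sub>m (2^n) + complex_of_real (of_int e * \<eta>) \<cdot>\<^sub>m gammaS n S)"

definition jointly_measures :: "nat \<Rightarrow> ((nat \<Rightarrow> int) \<Rightarrow> nat set \<Rightarrow> complex mat) \<Rightarrow> (int \<Rightarrow> complex mat) \<Rightarrow> bool" where
  "jointly_measures n G M \<longleftrightarrow> (\<exists>p :: (nat \<Rightarrow> int) \<Rightarrow> nat set \<Rightarrow> int \<Rightarrow> real.
     (\<forall>q\<in>q_set n. \<forall>X\<in>Pow (idx2 n). (\<forall>e\<in>{-1, 1}. p q X e \<ge> 0) \<and> (\<Sum>e\<in>{-1, 1}. p q X e) = 1) \<and>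
     (\<forall>e\<in>{-1, 1}. M e = mat (2^n) (2^n) (\<lambda>(a, b).
        \<Sum>q\<in>q_set n. \<Sum>X\<in>Pow (idx2 n). complex_of_real (p q X e) * G q X $$ (a, b))))"

end

theory Submission
  imports Defs "HOL-Library.FuncSet"
begin

lemma flip_lt: fixes y :: nat assumes "q < n" "y < 2^n" shows "flip_bit q y < 2^n"
proof -
  have "take_bit n y = y" using assms by (simp add: take_bit_nat_eq_self_iff)
  have "take_bit n (flip_bit q y) = flip_bit q y"
    by (rule bit_eqI) (use \<open>take_bit n y = y\<close> assms in \<open>auto simp: bit_take_bit_iff bit_flip_bit_iff
        dest: arg_cong[where f="\<lambda>x. bit x _"]\<close>)
  thus ?thesis by (metis take_bit_nat_less_exp)
qed

definition par :: "nat \<Rightarrow> nat \<Rightarrow> complex" where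
  "par q b = (-1::complex) ^ card {l. l < q \<and> bit b l}"

definition ph :: "nat \<Rightarrow> nat \<Rightarrow> complex" where
  "ph m b = (if odd m then par ((m-1) div 2) b
     else \<i> * (if bit b ((m-1) div 2) then -1 else 1) * par ((m-1) div 2) b)"

lemma maj_carrier[simp]: "maj n m \<in> carrier_mat (2^n) (2^n)"
  unfolding maj_def by simp

lemma maj_entry: "a < 2^n \<Longrightarrow> b < 2^n \<Longrightarrow>
   maj n m $$ (a,b) = (if a = flip_bit ((m-1) div 2) b then ph m b else 0)"
  unfolding maj_def ph_def par_def by (simp add: Let_def)

lemma mat_mult_entry: "A \<in> carrier_mat N N \<Longrightarrow> B \<in> carrier_mat N N \<Longrightarrow> x < N \<Longrightarrow> y < N \<Longrightarrow>
  (A * B) $$ (x,y) = (\<Sum>z<N. A $$ (x,z) * B $$ (z,y))"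
  by (simp add: scalar_prod_def atLeast0LessThan)

lemma mult_maj_right:
  assumes A: "A \<in> carrier_mat (2^n) (2^n)" and xy: "x < 2^n" "y < 2^n" and q: "(m-1) div 2 < n"
  shows "(A * maj n m) $$ (x,y) = A $$ (x, flip_bit ((m-1) div 2) y) * ph m y"
proof -
  have fl: "flip_bit ((m-1) div 2) y < 2^n" using flip_lt[OF q xy(2)] .
  have "(A * maj n m) $$ (x,y) = (\<Sum>z<2^n. A $$ (x,z) * maj n m $$ (z,y))"
    using mat_mult_entry[OF A maj_carrier xy] .
  also have "\<dots> = (\<Sum>z<2^n. if z = flip_bit ((m-1) div 2) y then A $$ (x,z) * ph m y else 0)"
    by (rule sum.cong) (auto simp: maj_entry xy)
  also have "\<dots> = A $$ (x, flip_bit ((m-1) div 2) y) * ph m y"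
    using fl by simp
  finally show ?thesis .
qed

lemma par_flip_high: "p \<ge> q \<Longrightarrow> par q (flip_bit p b) = par q b"
  unfolding par_def by (rule arg_cong[where f="\<lambda>x. (-1::complex)^card x"]) (auto simp: bit_flip_bit_iff)

lemma par_flip_low: assumes "p < q" shows "par q (flip_bit p b) = - par q b"
proof -
  let ?A = "{l. l < q \<and> bit b l}"
  have fin: "finite ?A" by simp
  have eq: "{l. l < q \<and> bit (flip_bit p b) l} = (if bit b p then ?A - {p} else insert p ?A)"
    using assms by (auto simp: bit_flip_bit_iff)
  show ?thesis
  proof (cases "bit b p")
    case True
    then have "p \<in> ?A" using assms by simp
    then have "card ?A = Suc (card (?A - {p}))" using card_Suc_Diff1[OF fin] by simp
    then show ?thesis unfolding par_def using eq True by simp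
  next
    case False
    then have "p \<notin> ?A" by simp
    then show ?thesis unfolding par_def using eq False fin by simp
  qed
qed

lemma flip_comm: "flip_bit p (flip_bit q (y::nat)) = flip_bit q (flip_bit p y)"
  by (rule bit_eqI) (auto simp: bit_flip_bit_iff)

lemma bit_flip_other: "p \<noteq> q \<Longrightarrow> bit (flip_bit p (y::nat)) q = bit y q"
  by (auto simp: bit_flip_bit_iff)

lemma bit_flip_same: "bit (flip_bit p (y::nat)) p = (\<not> bit y p)"
  by (auto simp: bit_flip_bit_iff)

lemma ph_anticomm:
  assumes ab: "a < b" "1 \<le> a"
  shows "ph a (flip_bit ((b-1) div 2) y) * ph b y = - (ph b (flip_bit ((a-1) div 2) y) * ph a y)"
proof -
  define qa where "qa = (a-1) div 2"
  define qb where "qb = (b-1) div 2"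
  have le: "qa \<le> qb" unfolding qa_def qb_def using ab by (simp add: div_le_mono)
  show ?thesis
  proof (cases "qa < qb")
    case True
    have 1: "ph a (flip_bit qb y) = ph a y"
      unfolding ph_def qa_def[symmetric] using True by (simp add: par_flip_high bit_flip_other)
    have 2: "ph b (flip_bit qa y) = - ph b y"
      unfolding ph_def qb_def[symmetric] using True by (simp add: par_flip_low bit_flip_other)
    show ?thesis unfolding qa_def[symmetric] qb_def[symmetric] 1 2 by simp
  next
    case False
    then have eq: "qa = qb" using le by simp
    then have oa: "odd a" and eb: "even b" using ab unfolding qa_def qb_def by presburger+
    have 1: "ph a (flip_bit qb y) = par qa y" unfolding ph_def qa_def[symmetric] using oa eq
      by (simp add: par_flip_high)
    have 2: "ph b (flip_bit qa y) = \<i> * (if bit y qa then 1 else -1) * par qa y"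
      unfolding ph_def qb_def[symmetric] using eb eq by (simp add: par_flip_high bit_flip_same)
    have 3: "ph b y = \<i> * (if bit y qa then -1 else 1) * par qa y"
      unfolding ph_def qb_def[symmetric] using eb eq by simp
    have 4: "ph a y = par qa y" unfolding ph_def qa_def[symmetric] using oa by simp
    show ?thesis unfolding qa_def[symmetric] qb_def[symmetric] 1 2 3 4 by simp
  qed
qed

lemma maj_anticomm_lt:
  assumes ab: "1 \<le> a" "a < b" "b \<le> 2*n"
  shows "maj n a * maj n b = (-1) \<cdot>\<^sub>m (maj n b * maj n a)"
proof (rule eq_matI)
  have qa: "(a-1) div 2 < n" and qb: "(b-1) div 2 < n" using ab by auto
  fix x y assume x: "x < dim_row ((-1) \<cdot>\<^sub>m (maj n b * maj n a))" and y: "y < dim_col ((-1) \<cdot>\<^sub>m (maj n b * maj n a))"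
  then have x': "x < 2^n" and y': "y < 2^n" by (auto simp: maj_def)
  have f1: "flip_bit ((b-1) div 2) y < 2^n" by (rule flip_lt[OF qb y'])
  have f2: "flip_bit ((a-1) div 2) y < 2^n" by (rule flip_lt[OF qa y'])
  have e: "((-1) \<cdot>\<^sub>m (maj n b * maj n a)) $$ (x,y) = - ((maj n b * maj n a) $$ (x,y))"
    using x y by simp
  show "(maj n a * maj n b) $$ (x, y) = ((-1) \<cdot>\<^sub>m (maj n b * maj n a)) $$ (x, y)"
    unfolding e using x' y' f1 f2 ph_anticomm[OF ab(2) ab(1), of y]
    by (simp add: mult_maj_right[OF maj_carrier x' y' qb] mult_maj_right[OF maj_carrier x' y' qa]
        maj_entry flip_comm)
qed (auto simp: maj_def)

lemma smult_neg_neg[simp]: "(-1::'a::ring_1) \<cdot>\<^sub>m ((-1) \<cdot>\<^sub>m M) = M"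
  by (rule eq_matI) auto

lemma maj_anticomm:
  assumes "1 \<le> a" "a \<le> 2*n" "1 \<le> b" "b \<le> 2*n" "a \<noteq> b"
  shows "maj n a * maj n b = (-1) \<cdot>\<^sub>m (maj n b * maj n a)"
proof (cases "a < b")
  case True then show ?thesis using maj_anticomm_lt assms by blast
next
  case False
  then have "maj n b * maj n a = (-1) \<cdot>\<^sub>m (maj n a * maj n b)" using maj_anticomm_lt assms by auto
  then show ?thesis by simp
qed

lemma sq_mult_carrier[simp]: "(A::'a::comm_ring_1 mat) \<in> carrier_mat N N \<Longrightarrow> B \<in> carrier_mat N N \<Longrightarrow> A * B \<in> carrier_mat N N"
  by (rule mult_carrier_mat)
lemma sq_one_left[simp]: "(A::'a::comm_ring_1 mat) \<in> carrier_mat N N \<Longrightarrow> 1\<^sub>m N * A = A" by (rule left_mult_one_mat)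
lemma sq_one_right[simp]: "(A::'a::comm_ring_1 mat) \<in> carrier_mat N N \<Longrightarrow> A * 1\<^sub>m N = A" by (rule right_mult_one_mat)
lemma sq_smult_left[simp]: "(A::'a::comm_ring_1 mat) \<in> carrier_mat N N \<Longrightarrow> B \<in> carrier_mat N N \<Longrightarrow> (k \<cdot>\<^sub>m A) * B = k \<cdot>\<^sub>m (A * B)"
  by (rule mult_smult_assoc_mat)
lemma sq_smult_right[simp]: "(A::'a::comm_ring_1 mat) \<in> carrier_mat N N \<Longrightarrow> B \<in> carrier_mat N N \<Longrightarrow> A * (k \<cdot>\<^sub>m B) = k \<cdot>\<^sub>m (A * B)"
  by (rule mult_smult_distrib)
lemma sq_assoc: "(A::'a::comm_ring_1 mat) \<in> carrier_mat N N \<Longrightarrow> B \<in> carrier_mat N N \<Longrightarrow> C \<in> carrier_mat N N \<Longrightarrow> (A * B) * C = A * (B * C)"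
  by (rule assoc_mult_mat)

definition P :: "nat \<Rightarrow> nat list \<Rightarrow> complex mat" where
  "P n xs = foldr (*) (map (maj n) xs) (1\<^sub>m (2^n))"

lemma P_carrier[simp]: "P n xs \<in> carrier_mat (2^n) (2^n)"
  unfolding P_def by (induction xs) auto

lemma P_Cons: "P n (x#xs) = maj n x * P n xs" unfolding P_def by simp

lemma P_Nil: "P n [] = 1\<^sub>m (2^n)" unfolding P_def by simp

lemma P_append: "P n (xs @ ys) = P n xs * P n ys"
proof (induction xs)
  case Nil then show ?case by (simp add: P_Nil)
next
  case (Cons x xs)
  then show ?case by (simp add: P_Cons sq_assoc[where N="2^n"])
qed

lemma smult_smult_m: "(a::'a::comm_ring_1) \<cdot>\<^sub>m (b \<cdot>\<^sub>m M) = (a * b) \<cdot>\<^sub>m M"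
  by (rule eq_matI) auto

lemma maj_P_insort:
  assumes "x \<notin> set ys" "1 \<le> x" "x \<le> 2*n" "\<forall>y\<in>set ys. 1 \<le> y \<and> y \<le> 2*n"
  shows "\<exists>s\<in>{1,-1::complex}. maj n x * P n ys = s \<cdot>\<^sub>m P n (insort x ys)"
  using assms
proof (induction ys)
  case Nil then show ?case by (intro bexI[of _ 1]) (auto simp: P_Cons P_Nil)
next
  case (Cons y ys)
  show ?case
  proof (cases "x \<le> y")
    case True then show ?thesis by (intro bexI[of _ 1]) (auto simp: P_Cons)
  next
    case False
    from Cons obtain s where s: "s \<in> {1,-1}" "maj n x * P n ys = s \<cdot>\<^sub>m P n (insort x ys)" by auto
    have xy: "x \<noteq> y" using Cons.prems by auto
    have "maj n x * P n (y#ys) = maj n x * (maj n y * P n ys)" by (simp add: P_Cons)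
    also have "\<dots> = (maj n x * maj n y) * P n ys"
      by (simp add: sq_assoc[where N="2^n"])
    also have "\<dots> = ((-1) \<cdot>\<^sub>m (maj n y * maj n x)) * P n ys"
      using maj_anticomm[of x n y] Cons.prems xy by simp
    also have "\<dots> = (-1) \<cdot>\<^sub>m (maj n y * (maj n x * P n ys))"
      by (simp add: sq_assoc[where N="2^n"] sq_smult_left[where N="2^n"])
    also have "\<dots> = (-1) \<cdot>\<^sub>m (maj n y * (s \<cdot>\<^sub>m P n (insort x ys)))" using s by simp
    also have "\<dots> = (-s) \<cdot>\<^sub>m P n (insort x (y#ys))"
      using False by (simp add: P_Cons smult_smult_m sq_smult_right[where N="2^n"])
    finally show ?thesis using s by (intro bexI[of _ "-s"]) auto
  qed
qed

lemma P_sort: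
  assumes "distinct xs" "\<forall>y\<in>set xs. 1 \<le> y \<and> y \<le> 2*n"
  shows "\<exists>s\<in>{1,-1::complex}. P n xs = s \<cdot>\<^sub>m P n (sort xs)"
  using assms
proof (induction xs)
  case Nil then show ?case by (intro bexI[of _ 1]) auto
next
  case (Cons x xs)
  from Cons obtain s where s: "s \<in> {1,-1}" "P n xs = s \<cdot>\<^sub>m P n (sort xs)" by auto
  obtain s' where s': "s' \<in> {1,-1::complex}" "maj n x * P n (sort xs) = s' \<cdot>\<^sub>m P n (insort x (sort xs))"
    using maj_P_insort[of x "sort xs" n] Cons.prems by auto
  have "P n (x#xs) = maj n x * (s \<cdot>\<^sub>m P n (sort xs))" using s by (simp add: P_Cons)
  also have "\<dots> = (s * s') \<cdot>\<^sub>m P n (sort (x#xs))"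
    using s' by (simp add: smult_smult_m sq_smult_right[where N="2^n"])
  finally show ?case using s s' by (intro bexI[of _ "s*s'"]) auto
qed

lemma gammaS_P: "gammaS n T = (\<i> ^ (card T choose 2)) \<cdot>\<^sub>m P n (sorted_list_of_set T)"
  unfolding gammaS_def P_def ..

lemma gammaS_carrier[simp]: "gammaS n T \<in> carrier_mat (2^n) (2^n)"
  unfolding gammaS_P by simp

lemma Q_concat:
  "foldr (*) (map (gammaS n) Ts) (1\<^sub>m (2^n)) =
    (\<i> ^ sum_list (map (\<lambda>T. card T choose 2) Ts)) \<cdot>\<^sub>m P n (concat (map sorted_list_of_set Ts))"
proof (induction Ts)
  case Nil then show ?case by (auto simp: P_Nil)
next
  case (Cons T Ts)
  then show ?case
    by (simp add: gammaS_P P_append sq_smult_right[where N="2^n"] sq_smult_left[where N="2^n"] 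
        smult_smult_m power_add mult.commute)
qed

lemma Q_gamma:
  assumes fin: "\<forall>T\<in>set Ts. finite T \<and> T \<subseteq> {1..2*n}"
    and dist: "distinct (concat (map sorted_list_of_set Ts))"
    and sb: "sum_list (map (\<lambda>T. card T choose 2) Ts) = k"
    and cU: "card (\<Union>(set Ts)) = 2*k"
  shows "\<exists>s\<in>{1,-1::complex}. foldr (*) (map (gammaS n) Ts) (1\<^sub>m (2^n)) = s \<cdot>\<^sub>m gammaS n (\<Union>(set Ts))"
proof -
  let ?c = "concat (map sorted_list_of_set Ts)"
  have setc: "set ?c = \<Union>(set Ts)" using fin by auto
  obtain s where s: "s \<in> {1,-1::complex}" "P n ?c = s \<cdot>\<^sub>m P n (sort ?c)"
    using P_sort[OF dist, of n] fin setc by fastforce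
  have so: "sort ?c = sorted_list_of_set (\<Union>(set Ts))"
    using dist setc by (metis sorted_list_of_set_sort_remdups distinct_remdups_id)
  have ch: "(2*k choose 2) = k + 2 * (k * (k - 1))"
    by (cases k) (auto simp: choose_two algebra_simps)
  have ev: "even (k * (k - 1))" by (cases "even k") auto
  have "(\<i>::complex) ^ (2*k choose 2) = \<i> ^ k"
  proof -
    obtain m where "k * (k-1) = 2*m" using ev by blast
    then have "(\<i>::complex) ^ (2*k choose 2) = \<i>^k * (\<i>^4)^m"
      unfolding ch by (simp add: power_add power_mult[symmetric] mult.commute)
    then show ?thesis by simp
  qed
  then have g: "gammaS n (\<Union>(set Ts)) = \<i>^k \<cdot>\<^sub>m P n (sorted_list_of_set (\<Union>(set Ts)))"
    unfolding gammaS_P cU by simp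
  show ?thesis
    using s unfolding Q_concat sb so g by (intro bexI[of _ s]) (auto simp: smult_smult_m mult.commute)
qed

definition msum :: "nat \<Rightarrow> ('b \<Rightarrow> 'a::comm_ring_1 mat) \<Rightarrow> 'b set \<Rightarrow> 'a mat" where
  "msum N F A = mat N N (\<lambda>(a,b). \<Sum>x\<in>A. F x $$ (a,b))"

lemma msum_carrier[simp]: "msum N F A \<in> carrier_mat N N" unfolding msum_def by simp

lemma dim_msum[simp]: "dim_row (msum N F A) = N" "dim_col (msum N F A) = N" unfolding msum_def by auto

lemma msum_entry: "a < N \<Longrightarrow> b < N \<Longrightarrow> msum N F A $$ (a,b) = (\<Sum>x\<in>A. F x $$ (a,b))"
  unfolding msum_def by simp

lemma msum_cong: "(\<And>x. x \<in> A \<Longrightarrow> F x = G x) \<Longrightarrow> msum N F A = msum N G A"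
  unfolding msum_def by (auto intro!: cong_mat sum.cong)

lemma msum_mult_left:
  assumes B: "B \<in> carrier_mat N N" and F: "\<And>x. x \<in> A \<Longrightarrow> F x \<in> carrier_mat N N"
  shows "B * msum N F A = msum N (\<lambda>x. B * F x) A"
proof (rule eq_matI)
  fix i j assume i: "i < dim_row (msum N (\<lambda>x. B * F x) A)" and j: "j < dim_col (msum N (\<lambda>x. B * F x) A)"
  then have i': "i < N" and j': "j < N" by auto
  have "(B * msum N F A) $$ (i,j) = (\<Sum>z<N. B $$ (i,z) * (\<Sum>x\<in>A. F x $$ (z,j)))"
    using mat_mult_entry[OF B msum_carrier i' j'] by (simp add: msum_entry j')
  also have "\<dots> = (\<Sum>x\<in>A. \<Sum>z<N. B $$ (i,z) * F x $$ (z,j))"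
    by (simp add: sum_distrib_left sum.swap[of _ A])
  also have "\<dots> = (\<Sum>x\<in>A. (B * F x) $$ (i,j))"
    by (rule sum.cong) (auto simp: mat_mult_entry[OF B F i' j'])
  finally show "(B * msum N F A) $$ (i,j) = msum N (\<lambda>x. B * F x) A $$ (i,j)"
    by (simp add: msum_entry i' j')
qed (use B in auto)

lemma msum_mult_right:
  assumes B: "B \<in> carrier_mat N N" and F: "\<And>x. x \<in> A \<Longrightarrow> F x \<in> carrier_mat N N"
  shows "msum N F A * B = msum N (\<lambda>x. F x * B) A"
proof (rule eq_matI)
  fix i j assume i: "i < dim_row (msum N (\<lambda>x. F x * B) A)" and j: "j < dim_col (msum N (\<lambda>x. F x * B) A)"
  then have i': "i < N" and j': "j < N" by auto
  have "(msum N F A * B) $$ (i,j) = (\<Sum>z<N. (\<Sum>x\<in>A. F x $$ (i,z)) * B $$ (z,j))"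
    using mat_mult_entry[OF msum_carrier B i' j'] by (simp add: msum_entry i')
  also have "\<dots> = (\<Sum>x\<in>A. \<Sum>z<N. F x $$ (i,z) * B $$ (z,j))"
    by (simp add: sum_distrib_right sum.swap[of _ A])
  also have "\<dots> = (\<Sum>x\<in>A. (F x * B) $$ (i,j))"
    by (rule sum.cong) (auto simp: mat_mult_entry[OF F B i' j'])
  finally show "(msum N F A * B) $$ (i,j) = msum N (\<lambda>x. F x * B) A $$ (i,j)"
    by (simp add: msum_entry i' j')
qed (use B in auto)

lemma msum_msum: "msum N (\<lambda>x. msum N (G x) B) A = msum N (\<lambda>(x,y). G x y) (A \<times> B)"
  unfolding msum_def by (rule cong_mat) (auto simp: sum.cartesian_product split_beta)

lemma msum_reindex: "inj_on h A \<Longrightarrow> msum N F (h ` A) = msum N (\<lambda>x. F (h x)) A"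
  unfolding msum_def by (rule cong_mat) (auto simp: sum.reindex)

lemma msum_single: "F x \<in> carrier_mat N N \<Longrightarrow> msum N F {x} = F x"
  unfolding msum_def by (rule eq_matI) auto

lemma msum_mult:
  assumes F: "\<And>x. x \<in> A \<Longrightarrow> F x \<in> carrier_mat N N" and G: "\<And>y. y \<in> B \<Longrightarrow> G y \<in> carrier_mat N N"
  shows "msum N F A * msum N G B = msum N (\<lambda>(x,y). F x * G y) (A \<times> B)"
proof -
  have "msum N F A * msum N G B = msum N (\<lambda>x. F x * msum N G B) A"
    by (rule msum_mult_right) (auto simp: F)
  also have "\<dots> = msum N (\<lambda>x. msum N (\<lambda>y. F x * G y) B) A"
    by (rule msum_cong) (auto simp: msum_mult_left F G)
  finally show ?thesis by (simp add: msum_msum)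
qed

lemma foldr_carrier:
  "(\<And>j. j \<in> set js \<Longrightarrow> F j \<in> carrier_mat N N) \<Longrightarrow>
    foldr (*) (map F js) (1\<^sub>m N) \<in> carrier_mat N (N::nat)"
  for F :: "_ \<Rightarrow> 'a::comm_ring_1 mat"
  by (induction js) auto

lemma multilinear:
  fixes F :: "'j \<Rightarrow> 't \<Rightarrow> 'a::comm_ring_1 mat"
  assumes "distinct js"
    and F: "\<And>j t. j \<in> set js \<Longrightarrow> t \<in> A j \<Longrightarrow> F j t \<in> carrier_mat N N"
  shows "foldr (*) (map (\<lambda>j. msum N (F j) (A j)) js) (1\<^sub>m N) =
         msum N (\<lambda>f. foldr (*) (map (\<lambda>j. F j (f j)) js) (1\<^sub>m N)) (PiE (set js) A)"
  using assms
proof (induction js)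
  case Nil
  then show ?case by (simp add: msum_single)
next
  case (Cons j js)
  have jn: "j \<notin> set js" using Cons.prems by simp
  have IH: "foldr (*) (map (\<lambda>j. msum N (F j) (A j)) js) (1\<^sub>m N) =
         msum N (\<lambda>f. foldr (*) (map (\<lambda>j. F j (f j)) js) (1\<^sub>m N)) (PiE (set js) A)"
    using Cons by auto
  have "foldr (*) (map (\<lambda>j. msum N (F j) (A j)) (j#js)) (1\<^sub>m N) =
     msum N (F j) (A j) * msum N (\<lambda>f. foldr (*) (map (\<lambda>j. F j (f j)) js) (1\<^sub>m N)) (PiE (set js) A)"
    using IH by simp
  also have "\<dots> = msum N (\<lambda>(t,f). F j t * foldr (*) (map (\<lambda>j. F j (f j)) js) (1\<^sub>m N)) (A j \<times> PiE (set js) A)"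
    by (rule msum_mult) (auto intro!: foldr_carrier Cons.prems(2))
  also have "\<dots> = msum N (\<lambda>f. foldr (*) (map (\<lambda>j. F j (f j)) (j#js)) (1\<^sub>m N)) (PiE (set (j#js)) A)"
  proof -
    have "msum N (\<lambda>f. foldr (*) (map (\<lambda>j. F j (f j)) (j#js)) (1\<^sub>m N)) (PiE (set (j#js)) A)
       = msum N (\<lambda>x. (\<lambda>f. foldr (*) (map (\<lambda>j. F j (f j)) (j#js)) (1\<^sub>m N)) ((\<lambda>(y, g). g(j := y)) x))
           (A j \<times> PiE (set js) A)"
      by (simp only: set_simps PiE_insert_eq msum_reindex[OF inj_combinator[OF jn]])
    also have "\<dots> = msum N (\<lambda>(t,f). F j t * foldr (*) (map (\<lambda>j. F j (f j)) js) (1\<^sub>m N)) (A j \<times> PiE (set js) A)"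
    proof (rule msum_cong)
      fix x assume "x \<in> A j \<times> PiE (set js) A"
      obtain t g where x: "x = (t,g)" by force
      have mm: "map (\<lambda>j'. F j' ((g(j := t)) j')) js = map (\<lambda>j'. F j' (g j')) js"
        using jn by (auto intro!: map_cong)
      then show "(\<lambda>f. foldr (*) (map (\<lambda>j. F j (f j)) (j#js)) (1\<^sub>m N)) ((\<lambda>(y, g). g(j := y)) x) =
           (\<lambda>(t,f). F j t * foldr (*) (map (\<lambda>j. F j (f j)) js) (1\<^sub>m N)) x"
        unfolding x by (simp only: prod.case list.map foldr_Cons o_apply fun_upd_same mm)
    qed
    finally show ?thesis by simp
  qed
  finally show ?case .
qed

lemma submat_carrier: "submat_RS Om R S \<in> carrier_mat (card R) (card S)"
  unfolding submat_RS_def by simp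

lemma submat_entry: "i < card R \<Longrightarrow> i' < card S \<Longrightarrow>
   submat_RS Om R S $$ (i,i') = Om (sorted_list_of_set R ! i) (sorted_list_of_set S ! i')"
  unfolding submat_RS_def by simp

lemma det_zero_row:
  fixes A :: "'a::comm_ring_1 mat"
  assumes A: "A \<in> carrier_mat m m" and k: "k < m" and z: "\<And>i. i < m \<Longrightarrow> A $$ (k,i) = 0"
  shows "det A = 0"
proof -
  have "\<And>p. p permutes {0..<m} \<Longrightarrow> (\<Prod>i = 0..<m. A $$ (i, p i)) = 0"
  proof -
    fix p assume p: "p permutes {0..<m}"
    have "p k < m" using permutes_in_image[OF p] k by simp
    then show "(\<Prod>i = 0..<m. A $$ (i, p i)) = 0"
      using k z by (intro prod_zero[OF _ bexI[of _ k]]) auto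
  qed
  then show ?thesis unfolding det_def'[OF A] by simp
qed

definition pidx :: "'a list \<Rightarrow> 'a \<Rightarrow> nat" where
  "pidx xs x = (THE i. i < length xs \<and> xs ! i = x)"

lemma pidx: assumes "distinct xs" "x \<in> set xs" shows "pidx xs x < length xs \<and> xs ! pidx xs x = x"
proof -
  have "\<exists>!i. i < length xs \<and> xs ! i = x"
    using assms by (metis in_set_conv_nth nth_eq_iff_index_eq)
  then show ?thesis unfolding pidx_def by (rule theI')
qed

lemma det_monomial:
  fixes Om :: "nat \<Rightarrow> nat \<Rightarrow> real"
  assumes fin: "finite S" and inj: "inj_on \<rho> S"
    and key: "\<forall>s\<in>S. \<forall>s'\<in>S. Om (\<rho> s) s' \<noteq> 0 \<longleftrightarrow> s = s'"
  shows "\<bar>det (submat_RS Om (\<rho> ` S) S)\<bar> = (\<Prod>s\<in>S. \<bar>Om (\<rho> s) s\<bar>)"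
proof -
  define m where "m = card S"
  have cR: "card (\<rho> ` S) = m" unfolding m_def using card_image[OF inj] .
  define rs where "rs = sorted_list_of_set (\<rho> ` S)"
  define cs where "cs = sorted_list_of_set S"
  have lrs: "length rs = m" and lcs: "length cs = m" unfolding rs_def cs_def using cR fin m_def by auto
  have drs: "distinct rs" and dcs: "distinct cs" unfolding rs_def cs_def by auto
  have srs: "set rs = \<rho> ` S" and scs: "set cs = S" unfolding rs_def cs_def using fin by auto
  define \<sigma> where "\<sigma> r = the_inv_into S \<rho> r" for r
  have \<sigma>: "\<And>r. r \<in> \<rho> ` S \<Longrightarrow> \<sigma> r \<in> S \<and> \<rho> (\<sigma> r) = r"
    unfolding \<sigma>_def using inj by (auto simp: the_inv_into_f_f)
  define A where "A = submat_RS Om (\<rho> ` S) S"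
  have A: "A \<in> carrier_mat m m" unfolding A_def m_def using submat_carrier[of Om "\<rho> ` S" S] cR m_def by simp
  have Ae: "\<And>i i'. i < m \<Longrightarrow> i' < m \<Longrightarrow> A $$ (i,i') = Om (rs ! i) (cs ! i')"
    unfolding A_def rs_def cs_def using submat_entry cR m_def by metis
  define p where "p i = (if i < m then pidx cs (\<sigma> (rs ! i)) else i)" for i
  have rsi: "\<And>i. i < m \<Longrightarrow> rs ! i \<in> \<rho> ` S" using srs lrs nth_mem by blast
  have pl: "\<And>i. i < m \<Longrightarrow> p i < m \<and> cs ! p i = \<sigma> (rs ! i)"
    unfolding p_def using rsi \<sigma> scs lcs pidx[OF dcs] by metis
  have pinj: "inj_on p {0..<m}"
  proof (rule inj_onI)
    fix i j assume i: "i \<in> {0..<m}" and j: "j \<in> {0..<m}" and e: "p i = p j"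
    then have "\<sigma> (rs ! i) = \<sigma> (rs ! j)" using pl by (metis atLeastLessThan_iff)
    then have "rs ! i = rs ! j" using \<sigma> rsi i j by (metis atLeastLessThan_iff)
    then show "i = j" using drs i j lrs by (simp add: nth_eq_iff_index_eq)
  qed
  have pperm: "p permutes {0..<m}"
  proof (rule bij_imp_permutes)
    have "p ` {0..<m} \<subseteq> {0..<m}" using pl by auto
    then show "bij_betw p {0..<m} {0..<m}"
      using pinj by (simp add: bij_betw_def endo_inj_surj)
  next
    fix x assume "x \<notin> {0..<m}" then show "p x = x" unfolding p_def by simp
  qed
  have others: "\<And>q. q permutes {0..<m} \<Longrightarrow> q \<noteq> p \<Longrightarrow> (\<Prod>i = 0..<m. A $$ (i, q i)) = 0"
  proof -
    fix q assume q: "q permutes {0..<m}" and qp: "q \<noteq> p"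
    then obtain i where qi: "q i \<noteq> p i" by auto
    have im: "i < m" using qi q pperm by (metis atLeastLessThan_iff permutes_not_in)
    have qm: "q i < m" using permutes_in_image[OF q] im by simp
    have ne: "cs ! q i \<noteq> \<sigma> (rs ! i)" using pl[OF im] qi qm dcs lcs by (metis nth_eq_iff_index_eq)
    have "A $$ (i, q i) = 0"
      using Ae[OF im qm] key \<sigma>[OF rsi[OF im]] ne scs lcs qm nth_mem by metis
    then show "(\<Prod>i = 0..<m. A $$ (i, q i)) = 0" using im by (intro prod_zero[OF _ bexI[of _ i]]) auto
  qed
  have "det A = signof p * (\<Prod>i = 0..<m. A $$ (i, p i))"
  proof -
    have fin: "finite {q. q permutes {0..<m}}" by (simp add: finite_permutations)
    have z: "(\<Sum>q\<in>{q. q permutes {0..<m}} - {p}. signof q * (\<Prod>i = 0..<m. A $$ (i, q i))) = 0"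
      by (rule sum.neutral) (use others in auto)
    have pm: "p \<in> {q. q permutes {0..<m}}" using pperm by simp
    show ?thesis unfolding det_def'[OF A] sum.remove[OF fin pm] z by simp
  qed
  then have "\<bar>det A\<bar> = (\<Prod>i = 0..<m. \<bar>A $$ (i, p i)\<bar>)"
    by (simp add: abs_mult abs_prod sign_def)
  also have "\<dots> = (\<Prod>i = 0..<m. \<bar>Om (rs ! i) (\<sigma> (rs ! i))\<bar>)"
    by (rule prod.cong) (auto simp: Ae pl)
  also have "\<dots> = (\<Prod>r\<in>\<rho> ` S. \<bar>Om r (\<sigma> r)\<bar>)"
  proof -
    have im: "nth rs ` {0..<m} = set rs" using lrs by (auto simp: set_conv_nth)
    have ij: "inj_on (nth rs) {0..<m}" using drs lrs by (simp add: inj_on_nth)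
    show ?thesis unfolding srs[symmetric] im[symmetric] prod.reindex[OF ij] by simp
  qed
  also have "\<dots> = (\<Prod>s\<in>S. \<bar>Om (\<rho> s) s\<bar>)"
    by (simp add: prod.reindex[OF inj] \<sigma>_def the_inv_into_f_f[OF inj])
  finally show ?thesis unfolding A_def .
qed

lemma smult_entry: "A \<in> carrier_mat N M \<Longrightarrow> i < N \<Longrightarrow> j < M \<Longrightarrow> (c \<cdot>\<^sub>m A) $$ (i,j) = c * A $$ (i,j)"
  by auto

lemma msum_smult_out: "(\<And>x. x \<in> A \<Longrightarrow> F x \<in> carrier_mat N N) \<Longrightarrow>
   msum N (\<lambda>x. c \<cdot>\<^sub>m F x) A = c \<cdot>\<^sub>m msum N F A"
proof -
  assume F: "\<And>x. x \<in> A \<Longrightarrow> F x \<in> carrier_mat N N"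
  show ?thesis unfolding msum_def
  proof (rule eq_matI)
    fix i j assume "i < dim_row (c \<cdot>\<^sub>m mat N N (\<lambda>(a, b). \<Sum>x\<in>A. F x $$ (a, b)))" "j < dim_col (c \<cdot>\<^sub>m mat N N (\<lambda>(a, b). \<Sum>x\<in>A. F x $$ (a, b)))"
    then have ij: "i < N" "j < N" by auto
    have "\<And>x. x \<in> A \<Longrightarrow> (c \<cdot>\<^sub>m F x) $$ (i,j) = c * F x $$ (i,j)" using smult_entry F ij by blast
    then show "mat N N (\<lambda>(a, b). \<Sum>x\<in>A. (c \<cdot>\<^sub>m F x) $$ (a, b)) $$ (i, j) = (c \<cdot>\<^sub>m mat N N (\<lambda>(a, b). \<Sum>x\<in>A. F x $$ (a, b))) $$ (i, j)"
      using ij by (simp add: sum_distrib_left)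
  qed auto
qed

lemma msum_scalar: "M \<in> carrier_mat N N \<Longrightarrow> msum N (\<lambda>x. c x \<cdot>\<^sub>m M) A = (\<Sum>x\<in>A. c x) \<cdot>\<^sub>m M"
  unfolding msum_def by (rule eq_matI) (auto simp: sum_distrib_right)

lemma msum_swap: "msum N (\<lambda>x. msum N (H x) B) A = msum N (\<lambda>y. msum N (\<lambda>x. H x y) A) B"
  unfolding msum_def by (rule eq_matI) (auto intro: sum.swap)

lemma msum_only:
  assumes fin: "finite A" and f0: "f0 \<in> A" and z: "\<And>f. f \<in> A \<Longrightarrow> f \<noteq> f0 \<Longrightarrow> w f = 0"
    and M: "\<And>f. f \<in> A \<Longrightarrow> M f \<in> carrier_mat N N"
  shows "msum N (\<lambda>f. w f \<cdot>\<^sub>m M f) A = w f0 \<cdot>\<^sub>m M f0"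
proof (rule eq_matI)
  fix i j assume i: "i < dim_row (w f0 \<cdot>\<^sub>m M f0)" and j: "j < dim_col (w f0 \<cdot>\<^sub>m M f0)"
  then have i': "i < N" and j': "j < N" using M[OF f0] by auto
  have "(\<Sum>f\<in>A. (w f \<cdot>\<^sub>m M f) $$ (i,j)) = (w f0 \<cdot>\<^sub>m M f0) $$ (i,j) + (\<Sum>f\<in>A - {f0}. (w f \<cdot>\<^sub>m M f) $$ (i,j))"
    using sum.remove[OF fin f0] .
  also have "(\<Sum>f\<in>A - {f0}. (w f \<cdot>\<^sub>m M f) $$ (i,j)) = 0"
  proof (rule sum.neutral, rule ballI)
    fix f assume f: "f \<in> A - {f0}"
    show "(w f \<cdot>\<^sub>m M f) $$ (i,j) = 0"
      using z[of f] f smult_entry[OF M[of f] i' j'] by auto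
  qed
  finally show "msum N (\<lambda>f. w f \<cdot>\<^sub>m M f) A $$ (i,j) = (w f0 \<cdot>\<^sub>m M f0) $$ (i,j)"
    by (simp add: msum_entry i' j')
qed (use M[OF f0] in auto)

lemma smult_one_m[simp]: "(1::'a::ring_1) \<cdot>\<^sub>m A = A" by (rule eq_matI) auto

lemma foldr_smult:
  fixes M :: "'j \<Rightarrow> 'a::comm_ring_1 mat"
  assumes "distinct js" "\<And>j. j \<in> set js \<Longrightarrow> M j \<in> carrier_mat N N"
  shows "foldr (*) (map (\<lambda>j. c j \<cdot>\<^sub>m M j) js) (1\<^sub>m N) = (\<Prod>j\<in>set js. c j) \<cdot>\<^sub>m foldr (*) (map M js) (1\<^sub>m N)"
  using assms
proof (induction js)
  case Nil then show ?case by simp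
next
  case (Cons j js)
  have c: "foldr (*) (map M js) (1\<^sub>m N) \<in> carrier_mat N N" using Cons.prems by (auto intro!: foldr_carrier)
  have mj: "M j \<in> carrier_mat N N" using Cons.prems by auto
  let ?F = "foldr (*) (map M js) (1\<^sub>m N)"
  have c2: "prod c (set js) \<cdot>\<^sub>m ?F \<in> carrier_mat N N" using c by simp
  have "c j \<cdot>\<^sub>m M j * (prod c (set js) \<cdot>\<^sub>m ?F) = c j \<cdot>\<^sub>m (M j * (prod c (set js) \<cdot>\<^sub>m ?F))"
    by (rule sq_smult_left[OF mj c2])
  also have "\<dots> = (c j * prod c (set js)) \<cdot>\<^sub>m (M j * ?F)"
    by (simp add: sq_smult_right[OF mj c] smult_smult_m)
  finally show ?case using Cons by simp
qed

definition Af :: "nat \<Rightarrow> (nat \<Rightarrow> nat \<Rightarrow> real) \<Rightarrow> nat set \<Rightarrow> nat \<Rightarrow> complex mat" where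
  "Af n Om X j = mat (2^n) (2^n) (\<lambda>(a, b). \<Sum>S\<in>subsets_card n 2.
           complex_of_real (xS X S * det (submat_RS Om {2*j - 1, 2*j} S)) * gammaS n S $$ (a, b))"

lemma Af_carrier[simp]: "Af n Om X j \<in> carrier_mat (2^n) (2^n)" unfolding Af_def by simp

lemma Af_dims[simp]: "dim_row (Af n Om X j) = 2^n" "dim_col (Af n Om X j) = 2^n" unfolding Af_def by auto

lemma G_factor_Af: "G_factor n Om q X j = complex_of_real (1 / 2 ^ (2*n + 1)) \<cdot>\<^sub>m
     (1\<^sub>m (2^n) + of_int (q j) \<cdot>\<^sub>m Af n Om X j)"
  unfolding G_factor_def Af_def ..

lemma G_factor_carrier[simp]: "G_factor n Om q X j \<in> carrier_mat (2^n) (2^n)"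
  unfolding G_factor_Af by simp

lemma GF_sum1: "msum (2^n) (\<lambda>t. G_factor n Om (\<lambda>_. t) X j) {-1,1} = complex_of_real (1/2^(2*n)) \<cdot>\<^sub>m 1\<^sub>m (2^n)"
proof (rule eq_matI)
  fix a b assume a: "a < dim_row (complex_of_real (1/2^(2*n)) \<cdot>\<^sub>m 1\<^sub>m (2^n) :: complex mat)"
    and b: "b < dim_col (complex_of_real (1/2^(2*n)) \<cdot>\<^sub>m 1\<^sub>m (2^n) :: complex mat)"
  then have a': "a < 2^n" and b': "b < 2^n" by auto
  have h: "complex_of_real (1 / 2 ^ (2*n + 1)) * 2 = complex_of_real (1/2^(2*n))"
    by (simp add: field_simps)
  show "msum (2^n) (\<lambda>t. G_factor n Om (\<lambda>_. t) X j) {-1,1} $$ (a,b) =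
     (complex_of_real (1/2^(2*n)) \<cdot>\<^sub>m 1\<^sub>m (2^n)) $$ (a,b)"
    using a' b' h[symmetric] by (simp add: msum_entry G_factor_Af algebra_simps)
qed auto

lemma GF_sumt: "msum (2^n) (\<lambda>t. of_int t \<cdot>\<^sub>m G_factor n Om (\<lambda>_. t) X j) {-1,1} =
   complex_of_real (1/2^(2*n)) \<cdot>\<^sub>m Af n Om X j"
proof (rule eq_matI)
  fix a b assume a: "a < dim_row (complex_of_real (1/2^(2*n)) \<cdot>\<^sub>m Af n Om X j)"
    and b: "b < dim_col (complex_of_real (1/2^(2*n)) \<cdot>\<^sub>m Af n Om X j)"
  then have a': "a < 2^n" and b': "b < 2^n" by auto
  have h: "complex_of_real (1 / 2 ^ (2*n + 1)) * 2 = complex_of_real (1/2^(2*n))"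
    by (simp add: field_simps)
  show "msum (2^n) (\<lambda>t. of_int t \<cdot>\<^sub>m G_factor n Om (\<lambda>_. t) X j) {-1,1} $$ (a,b) =
     (complex_of_real (1/2^(2*n)) \<cdot>\<^sub>m Af n Om X j) $$ (a,b)"
    using a' b' h[symmetric] by (simp add: msum_entry G_factor_Af algebra_simps)
qed auto

lemma q_set_PiE: "q_set n = PiE (set [1..<n+1]) (\<lambda>_. {-1,1})"
proof -
  have "set [1..<n+1] = {1..n}" by auto
  then show ?thesis unfolding q_set_def by simp
qed

lemma qsum:
  assumes J: "J \<subseteq> {1..n}"
  shows "msum (2^n) (\<lambda>q. complex_of_real (\<Prod>j\<in>J. real_of_int (q j)) \<cdot>\<^sub>m G_op n Om q X) (q_set n) =
    complex_of_real (1/2^(2*n)) \<cdot>\<^sub>m foldr (*) (map (\<lambda>j. if j \<in> J then Af n Om X j else 1\<^sub>m (2^n)) [1..<n+1]) (1\<^sub>m (2^n))"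
proof -
  define js where "js = [1..<n+1]"
  have sjs: "set js = {1..n}" unfolding js_def by auto
  have djs: "distinct js" unfolding js_def by simp
  define GF where "GF j t = G_factor n Om (\<lambda>_. t) X j" for j t
  define w :: "nat \<Rightarrow> int \<Rightarrow> complex" where "w j t = (if j \<in> J then of_int t else 1)" for j t
  define \<kappa> :: complex where "\<kappa> = complex_of_real ((2 ^ (2*n)) ^ (n - 1))"
  define c' :: complex where "c' = complex_of_real (1/2^(2*n))"
  define F where "F j t = w j t \<cdot>\<^sub>m GF j t" for j t
  have GFc: "GF j t \<in> carrier_mat (2^n) (2^n)" for j t unfolding GF_def by simp
  have Fc: "F j t \<in> carrier_mat (2^n) (2^n)" for j t unfolding F_def using GFc by simp
  have step1: "complex_of_real (\<Prod>j\<in>J. real_of_int (q j)) \<cdot>\<^sub>m G_op n Om q X =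
      \<kappa> \<cdot>\<^sub>m foldr (*) (map (\<lambda>j. F j (q j)) js) (1\<^sub>m (2^n))" for q
  proof -
    have g: "G_op n Om q X = \<kappa> \<cdot>\<^sub>m foldr (*) (map (\<lambda>j. GF j (q j)) js) (1\<^sub>m (2^n))"
      unfolding G_op_def \<kappa>_def js_def GF_def G_factor_def by simp
    have pw: "complex_of_real (\<Prod>j\<in>J. real_of_int (q j)) = (\<Prod>j\<in>set js. w j (q j))"
    proof -
      have "(\<Prod>j\<in>set js. w j (q j)) = (\<Prod>j\<in>set js \<inter> J. of_int (q j))"
        unfolding w_def by (simp add: prod.inter_restrict[symmetric])
      also have "set js \<inter> J = J" using J sjs by auto
      finally show ?thesis by simp
    qed
    have fc: "foldr (*) (map (\<lambda>j. GF j (q j)) js) (1\<^sub>m (2^n)) \<in> carrier_mat (2^n) (2^n)"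
      by (rule foldr_carrier) (simp add: GFc)
    show ?thesis unfolding g pw F_def
      using foldr_smult[OF djs, of "\<lambda>j. GF j (q j)" "2^n" "\<lambda>j. w j (q j)"] GFc fc
      by (simp add: smult_smult_m mult.commute)
  qed
  have "msum (2^n) (\<lambda>q. complex_of_real (\<Prod>j\<in>J. real_of_int (q j)) \<cdot>\<^sub>m G_op n Om q X) (q_set n) =
      \<kappa> \<cdot>\<^sub>m msum (2^n) (\<lambda>q. foldr (*) (map (\<lambda>j. F j (q j)) js) (1\<^sub>m (2^n))) (PiE (set js) (\<lambda>_. {-1,1}))"
    unfolding step1 q_set_PiE js_def[symmetric]
    by (rule msum_smult_out) (auto intro!: foldr_carrier simp: Fc)
  also have "msum (2^n) (\<lambda>q. foldr (*) (map (\<lambda>j. F j (q j)) js) (1\<^sub>m (2^n))) (PiE (set js) (\<lambda>_. {-1,1}))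
      = foldr (*) (map (\<lambda>j. msum (2^n) (F j) {-1,1}) js) (1\<^sub>m (2^n))"
    by (rule multilinear[symmetric, OF djs]) (simp add: Fc)
  also have "map (\<lambda>j. msum (2^n) (F j) {-1,1}) js = map (\<lambda>j. c' \<cdot>\<^sub>m (if j \<in> J then Af n Om X j else 1\<^sub>m (2^n))) js"
  proof (rule map_cong[OF refl])
    fix j assume "j \<in> set js"
    show "msum (2^n) (F j) {-1,1} = c' \<cdot>\<^sub>m (if j \<in> J then Af n Om X j else 1\<^sub>m (2^n))"
    proof (cases "j \<in> J")
      case True
      then show ?thesis unfolding F_def w_def GF_def c'_def using GF_sumt by simp
    next
      case False
      then show ?thesis unfolding F_def w_def GF_def c'_def using GF_sum1 by simp
    qed
  qed
  also have "foldr (*) (map (\<lambda>j. c' \<cdot>\<^sub>m (if j \<in> J then Af n Om X j else 1\<^sub>m (2^n))) js) (1\<^sub>m (2^n)) =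
     (\<Prod>j\<in>set js. c') \<cdot>\<^sub>m foldr (*) (map (\<lambda>j. if j \<in> J then Af n Om X j else 1\<^sub>m (2^n)) js) (1\<^sub>m (2^n))"
    by (rule foldr_smult[OF djs]) simp
  also have "(\<Prod>j\<in>set js. c') = c' ^ n" unfolding sjs by simp
  also have "\<kappa> \<cdot>\<^sub>m (c' ^ n \<cdot>\<^sub>m foldr (*) (map (\<lambda>j. if j \<in> J then Af n Om X j else 1\<^sub>m (2^n)) js) (1\<^sub>m (2^n)))
     = (\<kappa> * c' ^ n) \<cdot>\<^sub>m foldr (*) (map (\<lambda>j. if j \<in> J then Af n Om X j else 1\<^sub>m (2^n)) js) (1\<^sub>m (2^n))"
    by (simp add: smult_smult_m)
  also have "\<kappa> * c' ^ n = complex_of_real (1/2^(2*n))"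
  proof -
    have "((2::real) ^ (2*n)) ^ (n - 1) * (1/2^(2*n)) ^ n = 1/2^(2*n)"
    proof (cases n)
      case 0 then show ?thesis by simp
    next
      case (Suc m)
      then show ?thesis by (simp add: power_one_over field_simps)
    qed
    then show ?thesis unfolding \<kappa>_def c'_def by (metis of_real_mult of_real_power)
  qed
  finally show ?thesis unfolding js_def .
qed

lemma xS_even:
  assumes X: "finite X" and T: "finite T" and ev: "even (card T)"
  shows "xS X T = (-1) ^ card (T \<inter> X)"
proof -
  have le: "card (T \<inter> X) \<le> card X * card T"
  proof (cases "X = {}")
    case True then show ?thesis by simp
  next
    case False
    then have "card X \<ge> 1" using X by (simp add: Suc_leI card_gt_0_iff)
    then have "card T \<le> card X * card T" by simp
    moreover have "card (T \<inter> X) \<le> card T" using T by (simp add: card_mono)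
    ultimately show ?thesis by linarith
  qed
  have evp: "even (card X * card T)" using ev by simp
  have "((-1::real) ^ (card X * card T - card (T \<inter> X))) * (-1) ^ card (T \<inter> X) = (-1) ^ (card X * card T)"
    using le by (simp add: power_add[symmetric])
  also have "\<dots> = 1" using evp by simp
  finally have "((-1::real) ^ (card X * card T - card (T \<inter> X))) = (-1) ^ card (T \<inter> X)"
    by (metis mult.right_neutral mult_minus1_right power_minus1_even power_minus_mult minus_one_mult_self
        mult.left_neutral mult.assoc)
  then show ?thesis unfolding xS_def .
qed

lemma card_as_sum: "finite A \<Longrightarrow> card {j\<in>A. Q j} = (\<Sum>j\<in>A. if Q j then 1 else (0::nat))"
proof -
  assume A: "finite A"
  have "(\<Sum>j\<in>A. if Q j then 1 else (0::nat)) = (\<Sum>j\<in>A. if j \<in> {j. Q j} then 1 else 0)" by simp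
  also have "\<dots> = card (A \<inter> {j. Q j})" using sum.inter_restrict[OF A, of "\<lambda>_. 1::nat" "{j. Q j}"] by simp
  also have "A \<inter> {j. Q j} = {j\<in>A. Q j}" by auto
  finally show ?thesis by simp
qed

lemma double_count:
  assumes "finite A" "finite X"
  shows "(\<Sum>x\<in>X. card {j\<in>A. x \<in> f j}) = (\<Sum>j\<in>A. card (f j \<inter> X))"
proof -
  have "(\<Sum>x\<in>X. card {j\<in>A. x \<in> f j}) = (\<Sum>x\<in>X. \<Sum>j\<in>A. if x \<in> f j then 1 else (0::nat))"
    using assms by (simp add: card_as_sum)
  also have "\<dots> = (\<Sum>j\<in>A. \<Sum>x\<in>X. if x \<in> f j then 1 else (0::nat))" by (rule sum.swap)
  also have "\<dots> = (\<Sum>j\<in>A. card (f j \<inter> X))"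
    using assms by (intro sum.cong refl) (simp add: card_as_sum[symmetric] Int_def conj_commute)
  finally show ?thesis .
qed

lemma chs_formula:
  fixes f :: "'j \<Rightarrow> nat set"
  assumes U: "finite U" and A: "finite A" and fU: "\<forall>j\<in>A. f j \<subseteq> U" and SU: "S \<subseteq> U"
    and fev: "\<forall>j\<in>A. even (card (f j))" and Sev: "even (card S)"
  shows "(\<Sum>X\<in>Pow U. xS X S * (\<Prod>j\<in>A. xS X (f j))) =
     (\<Prod>x\<in>U. (-1) ^ ((if x \<in> S then 1 else 0) + card {j\<in>A. x \<in> f j}) + 1)"
proof -
  define cnt where "cnt x = (if x \<in> S then 1 else 0) + card {j\<in>A. x \<in> f j}" for x
  have each: "xS X S * (\<Prod>j\<in>A. xS X (f j)) = (\<Prod>x\<in>X. (-1) ^ cnt x)" if XU: "X \<subseteq> U" for X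
  proof -
    have Xf: "finite X" using XU U finite_subset by blast
    have fS: "finite S" using SU U finite_subset by blast
    have ff: "\<And>j. j \<in> A \<Longrightarrow> finite (f j)" using fU U finite_subset by blast
    have "xS X S * (\<Prod>j\<in>A. xS X (f j)) = (-1) ^ card (S \<inter> X) * (\<Prod>j\<in>A. (-1) ^ card (f j \<inter> X))"
      using xS_even[OF Xf fS Sev] xS_even[OF Xf ff] fev by simp
    also have "\<dots> = (-1) ^ (card (S \<inter> X) + (\<Sum>j\<in>A. card (f j \<inter> X)))"
      by (simp add: power_add power_sum)
    also have "card (S \<inter> X) + (\<Sum>j\<in>A. card (f j \<inter> X)) = (\<Sum>x\<in>X. cnt x)"
    proof -
      have "card (S \<inter> X) = (\<Sum>x\<in>X. if x \<in> S then 1 else (0::nat))"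
        using Xf by (simp add: card_as_sum[symmetric] Int_def conj_commute)
      then show ?thesis unfolding cnt_def sum.distrib double_count[OF A Xf] by simp
    qed
    finally show ?thesis by (simp add: power_sum)
  qed
  have "(\<Sum>X\<in>Pow U. xS X S * (\<Prod>j\<in>A. xS X (f j))) = (\<Sum>X\<in>Pow U. (\<Prod>x\<in>X. (-1) ^ cnt x) * (\<Prod>x\<in>U - X. 1))"
    by (rule sum.cong) (auto simp: each)
  also have "\<dots> = (\<Prod>x\<in>U. (-1) ^ cnt x + 1)" by (rule prod_add[symmetric, OF U])
  finally show ?thesis unfolding cnt_def .
qed

locale jm =
  fixes n k :: nat and Om :: "nat \<Rightarrow> nat \<Rightarrow> real" and J S :: "nat set" and \<rho> :: "nat \<Rightarrow> nat"
  assumes Jn: "J \<subseteq> {1..n}" and cJ: "card J = k"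
    and Sx: "S \<in> subsets_card n (2*k)"
    and inj: "inj_on \<rho> S"
    and img: "\<rho> ` S = (\<Union>j\<in>J. {2*j-1, 2*j})"
    and key: "\<forall>s\<in>S. \<forall>s'\<in>S. Om (\<rho> s) s' \<noteq> 0 \<longleftrightarrow> s = s'"

context jm
begin

lemma SU: "S \<subseteq> idx2 n" "finite S" "card S = 2*k"
  using Sx unfolding subsets_card_def idx2_def by (auto intro: finite_subset)

definition \<tau> :: "nat \<Rightarrow> nat set" where "\<tau> j = {s\<in>S. \<rho> s \<in> {2*j-1, 2*j}}"

lemma \<tau>_sub: "\<tau> j \<subseteq> S" unfolding \<tau>_def by auto

lemma \<tau>_ab: assumes j: "j \<in> J"
  obtains a b where "a \<in> S" "b \<in> S" "\<rho> a = 2*j-1" "\<rho> b = 2*j" "a \<noteq> b" "\<tau> j = {a,b}"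
proof -
  have j1: "j \<ge> 1" using j Jn by auto
  have m1: "2*j-1 \<in> (\<Union>j\<in>J. {2*j-1, 2*j})" "2*j \<in> (\<Union>j\<in>J. {2*j-1, 2*j})" by (rule UN_I[OF j], simp)+
  have i1: "2*j-1 \<in> \<rho> ` S" using m1(1) by (simp only: img)
  have i2: "2*j \<in> \<rho> ` S" using m1(2) by (simp only: img)
  obtain a where a: "a \<in> S" "\<rho> a = 2*j-1" using i1 by (metis imageE)
  obtain b where b: "b \<in> S" "\<rho> b = 2*j" using i2 by (metis imageE)
  have ab: "a \<in> S" "b \<in> S" "\<rho> a = 2*j-1" "\<rho> b = 2*j" using a b by auto
  have ne: "a \<noteq> b"
  proof
    assume "a = b"
    then have "2*j-1 = 2*j" using ab by simp
    then show False using j1 by simp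
  qed
  have "\<tau> j = {a,b}"
  proof
    show "\<tau> j \<subseteq> {a,b}"
    proof
      fix s assume "s \<in> \<tau> j"
      then have s: "s \<in> S" "\<rho> s = 2*j-1 \<or> \<rho> s = 2*j" unfolding \<tau>_def by auto
      show "s \<in> {a,b}"
      proof (cases "\<rho> s = 2*j-1")
        case True
        then have "\<rho> s = \<rho> a" using ab by simp
        then have "s = a" using inj_onD[OF inj _ s(1) ab(1)] by simp
        then show ?thesis by simp
      next
        case False
        then have "\<rho> s = \<rho> b" using ab s by simp
        then have "s = b" using inj_onD[OF inj _ s(1) ab(2)] by simp
        then show ?thesis by simp
      qed
    qed
    show "{a,b} \<subseteq> \<tau> j" unfolding \<tau>_def using ab by simp
  qed
  then show ?thesis using that ab ne by blast
qed

lemma \<tau>_card: "j \<in> J \<Longrightarrow> card (\<tau> j) = 2"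
proof -
  assume j: "j \<in> J"
  obtain a b where "a \<noteq> b" "\<tau> j = {a,b}" using \<tau>_ab[OF j] by blast
  then show ?thesis by simp
qed

lemma \<rho>\<tau>: "j \<in> J \<Longrightarrow> \<rho> ` \<tau> j = {2*j-1, 2*j}"
proof -
  assume j: "j \<in> J"
  obtain a b where "\<rho> a = 2*j-1" "\<rho> b = 2*j" "\<tau> j = {a,b}" using \<tau>_ab[OF j] by blast
  then show ?thesis by simp
qed

lemma \<tau>_disj: "j \<in> J \<Longrightarrow> j' \<in> J \<Longrightarrow> j \<noteq> j' \<Longrightarrow> \<tau> j \<inter> \<tau> j' = {}"
proof -
  assume j: "j \<in> J" and j': "j' \<in> J" and ne: "j \<noteq> j'"
  have "j \<ge> 1" "j' \<ge> 1" using j j' Jn by auto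
  then show ?thesis unfolding \<tau>_def using ne by auto
qed

lemma \<tau>_union: "(\<Union>j\<in>J. \<tau> j) = S"
proof
  show "(\<Union>j\<in>J. \<tau> j) \<subseteq> S" using \<tau>_sub by auto
  show "S \<subseteq> (\<Union>j\<in>J. \<tau> j)"
  proof
    fix s assume s: "s \<in> S"
    then have "\<rho> s \<in> (\<Union>j\<in>J. {2*j-1, 2*j})" using img by auto
    then obtain j where "j \<in> J" "\<rho> s \<in> {2*j-1, 2*j}" by auto
    then show "s \<in> (\<Union>j\<in>J. \<tau> j)" unfolding \<tau>_def using s by auto
  qed
qed

definition TS :: "nat \<Rightarrow> nat set set" where
  "TS j = (if j \<in> J then subsets_card n 2 else {{}})"

definition f0 :: "nat \<Rightarrow> nat set" where
  "f0 = restrict (\<lambda>j. if j \<in> J then \<tau> j else {}) {1..n}"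

definition dd :: "nat \<Rightarrow> nat set \<Rightarrow> real" where
  "dd j T = (if j \<in> J then det (submat_RS Om {2*j-1, 2*j} T) else 1)"

lemma f0_PiE: "f0 \<in> PiE {1..n} TS"
proof -
  have "\<And>j. j \<in> J \<Longrightarrow> \<tau> j \<in> subsets_card n 2"
    using \<tau>_sub SU \<tau>_card unfolding subsets_card_def by auto
  then show ?thesis unfolding f0_def TS_def by auto
qed

lemma TS_sub: "T \<in> TS j \<Longrightarrow> T \<subseteq> idx2 n \<and> finite T \<and> even (card T)"
  unfolding TS_def subsets_card_def idx2_def by (auto split: if_splits intro: finite_subset)

lemma sorted_pair: "j \<ge> 1 \<Longrightarrow> sorted_list_of_set {2*j-1, 2*(j::nat)} = [2*j-1, 2*j]"
proof -
  assume "j \<ge> 1"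
  then have "{2*j-1, 2*j} = set [2*j-1, 2*j]" "sorted [2*j-1, 2*j]" "distinct [2*j-1, 2*j]" by auto
  then show ?thesis by (metis sorted_list_of_set.idem_if_sorted_distinct)
qed

lemma dd_nz_imp:
  assumes j: "j \<in> J" and T: "T \<in> subsets_card n 2" and TS': "T \<subseteq> S"
    and nz: "det (submat_RS Om {2*j-1, 2*j} T) \<noteq> 0"
  shows "T = \<tau> j"
proof -
  obtain a b where ab: "a \<in> S" "b \<in> S" "\<rho> a = 2*j-1" "\<rho> b = 2*j" "a \<noteq> b" "\<tau> j = {a,b}"
    using \<tau>_ab[OF j] by blast
  have j1: "j \<ge> 1" using j Jn by auto
  have cT: "card T = 2" and fT: "finite T" using T unfolding subsets_card_def idx2_def by (auto intro: finite_subset)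
  have cR: "card {2*j-1, 2*j} = 2" using j1 by auto
  define A where "A = submat_RS Om {2*j-1, 2*j} T"
  have A: "A \<in> carrier_mat 2 2" unfolding A_def using submat_carrier[of Om "{2*j-1, 2*j}" T] cR cT by simp
  have ent: "\<And>r i. r < 2 \<Longrightarrow> i < 2 \<Longrightarrow> A $$ (r,i) = Om ([2*j-1, 2*j] ! r) (sorted_list_of_set T ! i)"
    unfolding A_def using submat_entry[of _ "{2*j-1, 2*j}" _ T Om] cR cT sorted_pair[OF j1] by metis
  have inT: "\<And>i. i < 2 \<Longrightarrow> sorted_list_of_set T ! i \<in> T"
    using cT fT by (metis length_sorted_list_of_set nth_mem set_sorted_list_of_set)
  have aT: "a \<in> T"
  proof (rule ccontr)
    assume na: "a \<notin> T"
    have "det A = 0"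
    proof (rule det_zero_row[OF A, of 0])
      fix i :: nat assume i: "i < 2"
      have "sorted_list_of_set T ! i \<in> S" "sorted_list_of_set T ! i \<noteq> a" using inT[OF i] TS' na by auto
      then have z: "Om (\<rho> a) (sorted_list_of_set T ! i) = 0" using bspec[OF bspec[OF key ab(1)]] by metis
      then show "A $$ (0, i) = 0" using ent[of 0 i] i ab(3) by simp
    qed simp
    then show False using nz unfolding A_def by simp
  qed
  have bT: "b \<in> T"
  proof (rule ccontr)
    assume nb: "b \<notin> T"
    have "det A = 0"
    proof (rule det_zero_row[OF A, of 1])
      fix i :: nat assume i: "i < 2"
      have "sorted_list_of_set T ! i \<in> S" "sorted_list_of_set T ! i \<noteq> b" using inT[OF i] TS' nb by auto
      then have z: "Om (\<rho> b) (sorted_list_of_set T ! i) = 0" using bspec[OF bspec[OF key ab(2)]] by metis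
      then show "A $$ (1, i) = 0" using ent[of 1 i] i ab(4) by simp
    qed simp
    then show False using nz unfolding A_def by simp
  qed
  have "{a,b} \<subseteq> T" using aT bT by auto
  moreover have "card {a,b} = card T" using cT ab by auto
  ultimately have "{a,b} = T" using fT by (simp add: card_subset_eq)
  then show ?thesis using ab by simp
qed

end

context jm
begin

definition chs :: "(nat \<Rightarrow> nat set) \<Rightarrow> real" where
  "chs f = (\<Sum>X\<in>Pow (idx2 n). xS X S * (\<Prod>j\<in>{1..n}. xS X (f j)))"

definition allev :: "(nat \<Rightarrow> nat set) \<Rightarrow> bool" where
  "allev f \<longleftrightarrow> (\<forall>x\<in>idx2 n. even ((if x \<in> S then 1 else 0) + card {j\<in>{1..n}. x \<in> f j}))"

lemma U_fin: "finite (idx2 n)" "card (idx2 n) = 2*n" unfolding idx2_def by auto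

lemma chs_val: assumes f: "f \<in> PiE {1..n} TS"
  shows "chs f = (if allev f then 2^(2*n) else 0)"
proof -
  have fT: "\<forall>j\<in>{1..n}. f j \<in> TS j" using f by (auto simp: PiE_iff)
  have fU: "\<forall>j\<in>{1..n}. f j \<subseteq> idx2 n" and fev: "\<forall>j\<in>{1..n}. even (card (f j))"
    using fT TS_sub by blast+
  have "chs f = (\<Prod>x\<in>idx2 n. (-1) ^ ((if x \<in> S then 1 else 0) + card {j\<in>{1..n}. x \<in> f j}) + 1)"
    unfolding chs_def by (rule chs_formula[OF U_fin(1) _ fU SU(1)]) (use fev SU in auto)
  also have "\<dots> = (if allev f then 2^(2*n) else 0)"
  proof (cases "allev f")
    case True
    then have "(\<Prod>x\<in>idx2 n. (-1::real) ^ ((if x \<in> S then 1 else 0) + card {j\<in>{1..n}. x \<in> f j}) + 1) = (\<Prod>x\<in>idx2 n. 2)"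
      unfolding allev_def by (intro prod.cong refl) simp
    then show ?thesis using True U_fin by simp
  next
    case False
    then obtain x where x: "x \<in> idx2 n" "odd ((if x \<in> S then 1 else 0) + card {j\<in>{1..n}. x \<in> f j})"
      unfolding allev_def by auto
    have "(\<Prod>x\<in>idx2 n. (-1::real) ^ ((if x \<in> S then 1 else 0) + card {j\<in>{1..n}. x \<in> f j}) + 1) = 0"
      using x U_fin by (intro prod_zero[OF _ bexI[of _ x]]) auto
    then show ?thesis using False by simp
  qed
  finally show ?thesis .
qed

lemma allev_sub: assumes f: "f \<in> PiE {1..n} TS" and ev: "allev f"
  shows "\<forall>j\<in>J. f j \<subseteq> S"
proof -
  define cnt where "cnt x = card {j\<in>{1..n}. x \<in> f j}" for x
  have fT: "\<forall>j\<in>{1..n}. f j \<in> TS j" using f by (auto simp: PiE_iff)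
  have fU: "\<And>j. j \<in> {1..n} \<Longrightarrow> f j \<subseteq> idx2 n" using fT TS_sub by blast
  have tot: "(\<Sum>x\<in>idx2 n. cnt x) = 2*k"
  proof -
    have "(\<Sum>x\<in>idx2 n. cnt x) = (\<Sum>j\<in>{1..n}. card (f j \<inter> idx2 n))"
      unfolding cnt_def by (rule double_count) (auto simp: U_fin)
    also have "\<dots> = (\<Sum>j\<in>{1..n}. if j \<in> J then 2 else 0)"
    proof (rule sum.cong[OF refl])
      fix j assume j: "j \<in> {1..n}"
      then have "f j \<in> TS j" using f by (auto simp: PiE_iff)
      then show "card (f j \<inter> idx2 n) = (if j \<in> J then 2 else 0)"
        using fU[OF j] unfolding TS_def subsets_card_def by (auto simp: Int_absorb2 split: if_splits)
    qed
    also have "\<dots> = (\<Sum>j\<in>{1..n} \<inter> J. 2)" using sum.inter_restrict[of "{1..n}" "\<lambda>_. 2::nat" J] by simp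
    also have "{1..n} \<inter> J = J" using Jn by auto
    finally show ?thesis using cJ by simp
  qed
  have S1: "\<And>x. x \<in> S \<Longrightarrow> cnt x \<ge> 1"
  proof -
    fix x assume x: "x \<in> S"
    then have "x \<in> idx2 n" using SU by auto
    then have "even (1 + cnt x)" using ev x unfolding allev_def cnt_def by force
    then show "cnt x \<ge> 1" by (cases "cnt x") auto
  qed
  have "(\<Sum>x\<in>idx2 n. cnt x) = (\<Sum>x\<in>S. cnt x) + (\<Sum>x\<in>idx2 n - S. cnt x)"
    using sum.subset_diff[OF SU(1) U_fin(1), of cnt] by simp
  moreover have "(\<Sum>x\<in>S. cnt x) \<ge> (\<Sum>x\<in>S. 1)" by (rule sum_mono) (rule S1)
  moreover have "(\<Sum>x\<in>S. (1::nat)) = 2*k" using SU by simp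
  ultimately have "(\<Sum>x\<in>idx2 n - S. cnt x) = 0" using tot by linarith
  then have z: "\<And>x. x \<in> idx2 n - S \<Longrightarrow> cnt x = 0" using U_fin by simp
  show ?thesis
  proof (intro ballI subsetI)
    fix j x assume j: "j \<in> J" and x: "x \<in> f j"
    have jn: "j \<in> {1..n}" using j Jn by auto
    have xU: "x \<in> idx2 n" using fU[OF jn] x by auto
    show "x \<in> S"
    proof (rule ccontr)
      assume "x \<notin> S"
      then have "cnt x = 0" using z xU by auto
      moreover have "j \<in> {j\<in>{1..n}. x \<in> f j}" using jn x by auto
      ultimately show False unfolding cnt_def by auto
    qed
  qed
qed

lemma f0_allev: "allev f0"
  unfolding allev_def
proof
  fix x assume x: "x \<in> idx2 n"
  have eq: "{j\<in>{1..n}. x \<in> f0 j} = {j\<in>J. x \<in> \<tau> j}" unfolding f0_def using Jn by auto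
  show "even ((if x \<in> S then 1 else 0) + card {j\<in>{1..n}. x \<in> f0 j})"
  proof (cases "x \<in> S")
    case True
    then obtain j0 where j0: "j0 \<in> J" "x \<in> \<tau> j0" using \<tau>_union by blast
    have "{j\<in>J. x \<in> \<tau> j} = {j0}"
    proof
      show "{j\<in>J. x \<in> \<tau> j} \<subseteq> {j0}" using \<tau>_disj j0 by blast
      show "{j0} \<subseteq> {j\<in>J. x \<in> \<tau> j}" using j0 by auto
    qed
    then show ?thesis unfolding eq using True by simp
  next
    case False
    then have e: "{j\<in>J. x \<in> \<tau> j} = {}" using \<tau>_sub by blast
    show ?thesis unfolding eq e using False by simp
  qed
qed

lemma uniq:
  assumes f: "f \<in> PiE {1..n} TS" and sub: "\<forall>j\<in>J. f j \<subseteq> S"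
    and nz: "(\<Prod>j\<in>{1..n}. dd j (f j)) \<noteq> 0"
  shows "f = f0"
proof
  fix j
  show "f j = f0 j"
  proof (cases "j \<in> {1..n}")
    case False
    then show ?thesis using f f0_PiE by (metis PiE_arb)
  next
    case jn: True
    have fj: "f j \<in> TS j" using f jn by (auto simp: PiE_iff)
    show ?thesis
    proof (cases "j \<in> J")
      case True
      have "dd j (f j) \<noteq> 0" using nz jn by auto
      then have "det (submat_RS Om {2*j-1, 2*j} (f j)) \<noteq> 0" unfolding dd_def using True by simp
      then have "f j = \<tau> j" using dd_nz_imp[OF True _ _] fj sub True unfolding TS_def by auto
      then show ?thesis unfolding f0_def using True jn by simp
    next
      case False
      then show ?thesis using fj jn unfolding TS_def f0_def by simp
    qed
  qed
qed

lemma chs_dd_zero: "f \<in> PiE {1..n} TS \<Longrightarrow> f \<noteq> f0 \<Longrightarrow> chs f * (\<Prod>j\<in>{1..n}. dd j (f j)) = 0"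
  using chs_val allev_sub uniq by fastforce

lemma chs_f0: "chs f0 = 2^(2*n)"
  using chs_val[OF f0_PiE] f0_allev by simp

end

lemma xS_empty[simp]: "xS X {} = 1" unfolding xS_def by simp

lemma gammaS_empty[simp]: "gammaS n {} = 1\<^sub>m (2^n)" unfolding gammaS_P by (simp add: P_Nil numeral_2_eq_2)

context jm
begin

definition Bm :: "nat set \<Rightarrow> nat \<Rightarrow> complex mat" where
  "Bm X j = (if j \<in> J then Af n Om X j else 1\<^sub>m (2^n))"

definition Fm :: "nat set \<Rightarrow> nat \<Rightarrow> nat set \<Rightarrow> complex mat" where
  "Fm X j T = complex_of_real (xS X T * dd j T) \<cdot>\<^sub>m gammaS n T"

definition \<Gamma> :: "(nat \<Rightarrow> nat set) \<Rightarrow> complex mat" where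
  "\<Gamma> f = foldr (*) (map (\<lambda>j. gammaS n (f j)) [1..<n+1]) (1\<^sub>m (2^n))"

lemma Fm_carrier[simp]: "Fm X j T \<in> carrier_mat (2^n) (2^n)" unfolding Fm_def by simp

lemma \<Gamma>_carrier[simp]: "\<Gamma> f \<in> carrier_mat (2^n) (2^n)" unfolding \<Gamma>_def by (rule foldr_carrier) simp

lemma Bm_msum: "Bm X j = msum (2^n) (Fm X j) (TS j)"
proof (cases "j \<in> J")
  case True
  show ?thesis
  proof (rule eq_matI)
    fix a b assume a: "a < dim_row (msum (2^n) (Fm X j) (TS j))" and b: "b < dim_col (msum (2^n) (Fm X j) (TS j))"
    then have a': "a < 2^n" and b': "b < 2^n" by auto
    have "\<And>T. Fm X j T $$ (a,b) = complex_of_real (xS X T * det (submat_RS Om {2*j-1, 2*j} T)) * gammaS n T $$ (a,b)"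
      unfolding Fm_def dd_def using True smult_entry[OF gammaS_carrier a' b'] by simp
    then show "Bm X j $$ (a,b) = msum (2^n) (Fm X j) (TS j) $$ (a,b)"
      unfolding Bm_def TS_def using True a' b' by (simp add: msum_entry Af_def)
  qed (auto simp: Bm_def True)
next
  case False
  then show ?thesis unfolding Bm_def TS_def Fm_def dd_def by (simp add: msum_single)
qed

lemma foldr_Bm: "foldr (*) (map (Bm X) [1..<n+1]) (1\<^sub>m (2^n)) =
   msum (2^n) (\<lambda>f. complex_of_real (\<Prod>j\<in>{1..n}. xS X (f j) * dd j (f j)) \<cdot>\<^sub>m \<Gamma> f) (PiE {1..n} TS)"
proof -
  have sjs: "set [1..<n+1] = {1..n}" by auto
  have "foldr (*) (map (Bm X) [1..<n+1]) (1\<^sub>m (2^n)) = foldr (*) (map (\<lambda>j. msum (2^n) (Fm X j) (TS j)) [1..<n+1]) (1\<^sub>m (2^n))"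
  proof -
    have "Bm X = (\<lambda>j. msum (2^n) (Fm X j) (TS j))" by (rule ext) (rule Bm_msum)
    then show ?thesis by simp
  qed
  also have "\<dots> = msum (2^n) (\<lambda>f. foldr (*) (map (\<lambda>j. Fm X j (f j)) [1..<n+1]) (1\<^sub>m (2^n))) (PiE (set [1..<n+1]) TS)"
    by (rule multilinear) auto
  also have "\<dots> = msum (2^n) (\<lambda>f. complex_of_real (\<Prod>j\<in>{1..n}. xS X (f j) * dd j (f j)) \<cdot>\<^sub>m \<Gamma> f) (PiE {1..n} TS)"
    unfolding sjs
  proof (rule msum_cong)
    fix f
    have "foldr (*) (map (\<lambda>j. Fm X j (f j)) [1..<n+1]) (1\<^sub>m (2^n)) =
       (\<Prod>j\<in>set [1..<n+1]. complex_of_real (xS X (f j) * dd j (f j))) \<cdot>\<^sub>m \<Gamma> f"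
      unfolding Fm_def \<Gamma>_def by (rule foldr_smult) auto
    then show "foldr (*) (map (\<lambda>j. Fm X j (f j)) [1..<n+1]) (1\<^sub>m (2^n)) =
       complex_of_real (\<Prod>j\<in>{1..n}. xS X (f j) * dd j (f j)) \<cdot>\<^sub>m \<Gamma> f"
      unfolding sjs by simp
  qed
  finally show ?thesis .
qed

lemma Xsum: "msum (2^n) (\<lambda>X. complex_of_real (xS X S) \<cdot>\<^sub>m foldr (*) (map (Bm X) [1..<n+1]) (1\<^sub>m (2^n))) (Pow (idx2 n))
   = complex_of_real (2^(2*n) * (\<Prod>j\<in>{1..n}. dd j (f0 j))) \<cdot>\<^sub>m \<Gamma> f0"
proof -
  define w where "w X f = (\<Prod>j\<in>{1..n}. xS X (f j) * dd j (f j))" for X f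
  have "msum (2^n) (\<lambda>X. complex_of_real (xS X S) \<cdot>\<^sub>m foldr (*) (map (Bm X) [1..<n+1]) (1\<^sub>m (2^n))) (Pow (idx2 n))
     = msum (2^n) (\<lambda>X. msum (2^n) (\<lambda>f. complex_of_real (xS X S * w X f) \<cdot>\<^sub>m \<Gamma> f) (PiE {1..n} TS)) (Pow (idx2 n))"
  proof (rule msum_cong)
    fix X
    have "complex_of_real (xS X S) \<cdot>\<^sub>m msum (2^n) (\<lambda>f. complex_of_real (w X f) \<cdot>\<^sub>m \<Gamma> f) (PiE {1..n} TS)
       = msum (2^n) (\<lambda>f. complex_of_real (xS X S) \<cdot>\<^sub>m (complex_of_real (w X f) \<cdot>\<^sub>m \<Gamma> f)) (PiE {1..n} TS)"
      by (rule msum_smult_out[symmetric]) simp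
    then show "complex_of_real (xS X S) \<cdot>\<^sub>m foldr (*) (map (Bm X) [1..<n+1]) (1\<^sub>m (2^n)) =
        msum (2^n) (\<lambda>f. complex_of_real (xS X S * w X f) \<cdot>\<^sub>m \<Gamma> f) (PiE {1..n} TS)"
      unfolding foldr_Bm w_def by (simp add: smult_smult_m)
  qed
  also have "\<dots> = msum (2^n) (\<lambda>f. msum (2^n) (\<lambda>X. complex_of_real (xS X S * w X f) \<cdot>\<^sub>m \<Gamma> f) (Pow (idx2 n))) (PiE {1..n} TS)"
    by (rule msum_swap)
  also have "\<dots> = msum (2^n) (\<lambda>f. complex_of_real (chs f * (\<Prod>j\<in>{1..n}. dd j (f j))) \<cdot>\<^sub>m \<Gamma> f) (PiE {1..n} TS)"
  proof (rule msum_cong)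
    fix f
    have e0: "(\<Sum>X\<in>Pow (idx2 n). xS X S * w X f) = chs f * (\<Prod>j\<in>{1..n}. dd j (f j))"
      unfolding chs_def w_def by (simp add: prod.distrib sum_distrib_right mult.assoc)
    have e1: "msum (2^n) (\<lambda>X. complex_of_real (xS X S * w X f) \<cdot>\<^sub>m \<Gamma> f) (Pow (idx2 n)) =
       (\<Sum>X\<in>Pow (idx2 n). complex_of_real (xS X S * w X f)) \<cdot>\<^sub>m \<Gamma> f"
      by (rule msum_scalar) simp
    have e2: "(\<Sum>X\<in>Pow (idx2 n). complex_of_real (xS X S * w X f)) = complex_of_real (chs f * (\<Prod>j\<in>{1..n}. dd j (f j)))"
      by (simp only: of_real_sum[symmetric] e0)
    show "msum (2^n) (\<lambda>X. complex_of_real (xS X S * w X f) \<cdot>\<^sub>m \<Gamma> f) (Pow (idx2 n)) =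
      complex_of_real (chs f * (\<Prod>j\<in>{1..n}. dd j (f j))) \<cdot>\<^sub>m \<Gamma> f"
      by (simp only: e1 e2)
  qed
  also have "\<dots> = complex_of_real (chs f0 * (\<Prod>j\<in>{1..n}. dd j (f0 j))) \<cdot>\<^sub>m \<Gamma> f0"
  proof (rule msum_only[OF _ f0_PiE])
    have "\<And>j. finite (TS j)"
    proof -
      fix j
      have "subsets_card n 2 \<subseteq> Pow (idx2 n)" unfolding subsets_card_def by auto
      then have "finite (subsets_card n 2)" using U_fin(1) by (meson finite_Pow_iff finite_subset)
      then show "finite (TS j)" unfolding TS_def by simp
    qed
    then show "finite (PiE {1..n} TS)" by (intro finite_PiE) auto
    fix f assume "f \<in> PiE {1..n} TS" "f \<noteq> f0"
    then show "complex_of_real (chs f * (\<Prod>j\<in>{1..n}. dd j (f j))) = 0" using chs_dd_zero by simp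
  qed simp
  finally show ?thesis unfolding chs_f0 .
qed

end

lemma dist_concat:
  assumes "distinct js" "\<forall>j\<in>set js. finite (F j)"
    "\<forall>j\<in>set js. \<forall>j'\<in>set js. j \<noteq> j' \<longrightarrow> F j \<inter> F j' = {}"
  shows "distinct (concat (map (\<lambda>j. sorted_list_of_set (F j)) js))"
  using assms by (induction js) auto

context jm
begin

lemma f0_disj: "j \<in> {1..n} \<Longrightarrow> j' \<in> {1..n} \<Longrightarrow> j \<noteq> j' \<Longrightarrow> f0 j \<inter> f0 j' = {}"
  unfolding f0_def using \<tau>_disj by auto

lemma f0_union: "(\<Union>j\<in>{1..n}. f0 j) = S"
proof -
  have "(\<Union>j\<in>{1..n}. f0 j) = (\<Union>j\<in>J. \<tau> j)" unfolding f0_def using Jn by auto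
  then show ?thesis using \<tau>_union by simp
qed

lemma \<Gamma>_f0: "\<exists>s\<in>{1,-1::complex}. \<Gamma> f0 = s \<cdot>\<^sub>m gammaS n S"
proof -
  define js where "js = [1..<n+1]"
  have sjs: "set js = {1..n}" unfolding js_def by auto
  have djs: "distinct js" unfolding js_def by simp
  have f0T: "\<And>j. j \<in> {1..n} \<Longrightarrow> f0 j \<in> TS j" using f0_PiE by (auto simp: PiE_iff)
  have fin: "\<forall>T\<in>set (map f0 js). finite T \<and> T \<subseteq> {1..2*n}"
    using f0T TS_sub sjs unfolding idx2_def by fastforce
  have dist: "distinct (concat (map sorted_list_of_set (map f0 js)))"
    using dist_concat[OF djs, of f0] fin f0_disj sjs by (simp add: comp_def)
  have sb: "sum_list (map (\<lambda>T. card T choose 2) (map f0 js)) = k"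
  proof -
    have "sum_list (map (\<lambda>T. card T choose 2) (map f0 js)) = (\<Sum>j\<in>{1..n}. card (f0 j) choose 2)"
      using djs sjs by (simp add: sum_list_distinct_conv_sum_set comp_def)
    also have "\<dots> = (\<Sum>j\<in>{1..n}. if j \<in> J then 1 else 0)"
      by (rule sum.cong) (auto simp: f0_def \<tau>_card numeral_2_eq_2)
    also have "\<dots> = (\<Sum>j\<in>{1..n} \<inter> J. 1)" using sum.inter_restrict[of "{1..n}" "\<lambda>_. 1::nat" J] by simp
    also have "{1..n} \<inter> J = J" using Jn by auto
    finally show ?thesis using cJ by simp
  qed
  have un: "\<Union>(set (map f0 js)) = S" using f0_union sjs by simp
  have cU: "card (\<Union>(set (map f0 js))) = 2*k" using un SU by simp
  obtain s where s: "s \<in> {1,-1::complex}"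
    "foldr (*) (map (gammaS n) (map f0 js)) (1\<^sub>m (2^n)) = s \<cdot>\<^sub>m gammaS n (\<Union>(set (map f0 js)))"
    using Q_gamma[OF fin dist sb cU] by blast
  have "\<Gamma> f0 = foldr (*) (map (gammaS n) (map f0 js)) (1\<^sub>m (2^n))"
    unfolding \<Gamma>_def js_def by (simp add: comp_def)
  then show ?thesis using s un by auto
qed

lemma c0_abs: "\<bar>\<Prod>j\<in>{1..n}. dd j (f0 j)\<bar> = \<bar>det (submat_RS Om (\<rho> ` S) S)\<bar>"
proof -
  have "(\<Prod>j\<in>{1..n}. dd j (f0 j)) = (\<Prod>j\<in>{1..n}. if j \<in> J then det (submat_RS Om {2*j-1, 2*j} (\<tau> j)) else 1)"
    by (rule prod.cong) (auto simp: dd_def f0_def)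
  also have "\<dots> = (\<Prod>j\<in>{1..n} \<inter> J. det (submat_RS Om {2*j-1, 2*j} (\<tau> j)))"
    using prod.inter_restrict[of "{1..n}" "\<lambda>j. det (submat_RS Om {2*j-1, 2*j} (\<tau> j))" J] by simp
  also have "{1..n} \<inter> J = J" using Jn by auto
  finally have "\<bar>\<Prod>j\<in>{1..n}. dd j (f0 j)\<bar> = (\<Prod>j\<in>J. \<bar>det (submat_RS Om (\<rho> ` \<tau> j) (\<tau> j))\<bar>)"
    by (simp add: abs_prod \<rho>\<tau>)
  also have "\<dots> = (\<Prod>j\<in>J. \<Prod>s\<in>\<tau> j. \<bar>Om (\<rho> s) s\<bar>)"
  proof (rule prod.cong[OF refl])
    fix j assume j: "j \<in> J"
    have ft: "finite (\<tau> j)" using \<tau>_sub SU finite_subset by blast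
    show "\<bar>det (submat_RS Om (\<rho> ` \<tau> j) (\<tau> j))\<bar> = (\<Prod>s\<in>\<tau> j. \<bar>Om (\<rho> s) s\<bar>)"
    proof (rule det_monomial[OF ft inj_on_subset[OF inj \<tau>_sub]], intro ballI)
      fix s s' assume "s \<in> \<tau> j" "s' \<in> \<tau> j"
      then have "s \<in> S" "s' \<in> S" using \<tau>_sub by auto
      then show "(Om (\<rho> s) s' \<noteq> 0) = (s = s')" using key by blast
    qed
  qed
  also have "\<dots> = (\<Prod>s\<in>(\<Union>j\<in>J. \<tau> j). \<bar>Om (\<rho> s) s\<bar>)"
  proof (rule prod.UNION_disjoint[symmetric])
    show "finite J" using Jn finite_subset by blast
    show "\<forall>j\<in>J. finite (\<tau> j)" using \<tau>_sub SU finite_subset by blast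
    show "\<forall>i\<in>J. \<forall>j\<in>J. i \<noteq> j \<longrightarrow> \<tau> i \<inter> \<tau> j = {}" using \<tau>_disj by blast
  qed
  also have "\<dots> = \<bar>det (submat_RS Om (\<rho> ` S) S)\<bar>"
    unfolding \<tau>_union by (rule det_monomial[symmetric, OF SU(2) inj key])
  finally show ?thesis .
qed

end

lemma msum_add:
  assumes "\<And>x. x \<in> A \<Longrightarrow> F x \<in> carrier_mat N N" "\<And>x. x \<in> A \<Longrightarrow> H x \<in> carrier_mat N N"
  shows "msum N (\<lambda>x. F x + H x) A = msum N F A + msum N H A"
proof (rule eq_matI)
  fix i j assume "i < dim_row (msum N F A + msum N H A)" "j < dim_col (msum N F A + msum N H A)"
  then have ij: "i < N" "j < N" by auto
  have "\<And>x. x \<in> A \<Longrightarrow> (F x + H x) $$ (i,j) = F x $$ (i,j) + H x $$ (i,j)"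
    using assms ij by (metis carrier_matD index_add_mat(1))
  then show "msum N (\<lambda>x. F x + H x) A $$ (i,j) = (msum N F A + msum N H A) $$ (i,j)"
    using ij by (simp add: msum_entry sum.distrib)
qed auto

lemma foldr_ones: "foldr (*) (map (\<lambda>j. 1\<^sub>m N) js) (1\<^sub>m N) = (1\<^sub>m N :: 'a::comm_ring_1 mat)"
  by (induction js) auto

lemma xS_abs: "\<bar>xS X T\<bar> = 1" unfolding xS_def by simp

lemma G_op_carrier[simp]: "G_op n Om q X \<in> carrier_mat (2^n) (2^n)"
  unfolding G_op_def by (simp add: foldr_carrier)

lemma gammaS_dims[simp]: "dim_row (gammaS n T) = 2^n" "dim_col (gammaS n T) = 2^n"
  using gammaS_carrier[of n T] unfolding carrier_mat_def by auto

context jm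
begin

theorem jm_jointly: "jointly_measures n (G_op n Om) (M_op n \<bar>det (submat_RS Om (\<rho> ` S) S)\<bar> S)"
proof -
  define N where "N = (2::nat)^n"
  define \<eta> where "\<eta> = \<bar>det (submat_RS Om (\<rho> ` S) S)\<bar>"
  define c0 where "c0 = (\<Prod>j\<in>{1..n}. dd j (f0 j))"
  obtain s where s: "s \<in> {1,-1::complex}" "\<Gamma> f0 = s \<cdot>\<^sub>m gammaS n S" using \<Gamma>_f0 by blast
  define sr :: real where "sr = (if s = 1 then 1 else -1)"
  have s_sr: "s = complex_of_real sr" using s(1) unfolding sr_def by auto
  have sr2: "sr * sr = 1" unfolding sr_def by simp
  define \<sigma> where "\<sigma> = sgn c0 * sr"
  have \<sigma>\<eta>: "\<sigma> * c0 * sr = \<eta>"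
    unfolding \<sigma>_def \<eta>_def c0_abs[symmetric, folded c0_def]
    using sr2 by (metis abs_sgn mult.assoc mult.commute mult.right_neutral)
  have \<sigma>abs: "\<bar>\<sigma>\<bar> \<le> 1" unfolding \<sigma>_def sr_def by (simp add: abs_mult abs_sgn_eq)
  define p where "p q X e = (1 + real_of_int e * \<sigma> * xS X S * (\<Prod>j\<in>J. real_of_int (q j))) / 2"
    for q :: "nat \<Rightarrow> int" and X :: "nat set" and e :: int
  define cr :: real where "cr = 1/2^(2*n)"
  have Qfin: "finite (q_set n)" unfolding q_set_def by (intro finite_PiE) auto
  have Pcard: "card (Pow (idx2 n)) = 2^(2*n)" using U_fin by (simp add: card_Pow)
  show ?thesis
    unfolding jointly_measures_def \<eta>_def[symmetric]
  proof (intro exI[of _ p] conjI ballI)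
    fix q X assume q: "q \<in> q_set n" and X: "X \<in> Pow (idx2 n)"
    have qabs: "\<bar>\<Prod>j\<in>J. real_of_int (q j)\<bar> = 1"
    proof -
      have "\<And>j. j \<in> J \<Longrightarrow> \<bar>real_of_int (q j)\<bar> = 1"
        using q Jn unfolding q_set_def by (force simp: PiE_iff)
      then show ?thesis by (simp add: abs_prod)
    qed
    show "\<And>e. e \<in> {-1,1} \<Longrightarrow> 0 \<le> p q X e"
    proof -
      fix e :: int assume e: "e \<in> {-1,1}"
      have "\<bar>real_of_int e * \<sigma> * xS X S * (\<Prod>j\<in>J. real_of_int (q j))\<bar> \<le> 1"
        using e \<sigma>abs qabs xS_abs[of X S] by (auto simp: abs_mult)
      then have "-1 \<le> real_of_int e * \<sigma> * xS X S * (\<Prod>j\<in>J. real_of_int (q j))" by (simp add: abs_le_iff)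
      then show "0 \<le> p q X e" unfolding p_def by simp
    qed
    show "(\<Sum>e\<in>{-1,1}. p q X e) = 1" unfolding p_def by (simp add: field_simps)
  next
    fix e :: int assume e: "e \<in> {-1,1}"
    let ?F = "\<lambda>X. foldr (*) (map (Bm X) [1..<n+1]) (1\<^sub>m (2^n))"
    have Fc: "\<And>X. ?F X \<in> carrier_mat (2^n) (2^n)" by (rule foldr_carrier) (simp add: Bm_def)
    have inner: "msum (2^n) (\<lambda>q. complex_of_real (p q X e) \<cdot>\<^sub>m G_op n Om q X) (q_set n) =
       complex_of_real (cr/2) \<cdot>\<^sub>m 1\<^sub>m (2^n) + complex_of_real (real_of_int e * \<sigma> * xS X S / 2 * cr) \<cdot>\<^sub>m ?F X" for X
    proof -
      have "msum (2^n) (\<lambda>q. complex_of_real (p q X e) \<cdot>\<^sub>m G_op n Om q X) (q_set n) =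
         msum (2^n) (\<lambda>q. complex_of_real (1/2) \<cdot>\<^sub>m (complex_of_real (\<Prod>j\<in>{}. real_of_int (q j)) \<cdot>\<^sub>m G_op n Om q X) +
            complex_of_real (real_of_int e * \<sigma> * xS X S / 2) \<cdot>\<^sub>m (complex_of_real (\<Prod>j\<in>J. real_of_int (q j)) \<cdot>\<^sub>m G_op n Om q X)) (q_set n)"
      proof (rule msum_cong)
        fix q
        show "complex_of_real (p q X e) \<cdot>\<^sub>m G_op n Om q X =
          complex_of_real (1/2) \<cdot>\<^sub>m (complex_of_real (\<Prod>j\<in>{}. real_of_int (q j)) \<cdot>\<^sub>m G_op n Om q X) +
            complex_of_real (real_of_int e * \<sigma> * xS X S / 2) \<cdot>\<^sub>m (complex_of_real (\<Prod>j\<in>J. real_of_int (q j)) \<cdot>\<^sub>m G_op n Om q X)"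
          by (rule eq_matI) (auto simp: p_def field_simps)
      qed
      also have "\<dots> = complex_of_real (1/2) \<cdot>\<^sub>m msum (2^n) (\<lambda>q. complex_of_real (\<Prod>j\<in>{}. real_of_int (q j)) \<cdot>\<^sub>m G_op n Om q X) (q_set n)
          + complex_of_real (real_of_int e * \<sigma> * xS X S / 2) \<cdot>\<^sub>m msum (2^n) (\<lambda>q. complex_of_real (\<Prod>j\<in>J. real_of_int (q j)) \<cdot>\<^sub>m G_op n Om q X) (q_set n)"
        by (subst msum_add) (auto simp: msum_smult_out)
      also have "\<dots> = complex_of_real (1/2) \<cdot>\<^sub>m (complex_of_real cr \<cdot>\<^sub>m 1\<^sub>m (2^n))
          + complex_of_real (real_of_int e * \<sigma> * xS X S / 2) \<cdot>\<^sub>m (complex_of_real cr \<cdot>\<^sub>m ?F X)"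
      proof -
        have q0: "msum (2^n) (\<lambda>q. complex_of_real (\<Prod>j\<in>{}. real_of_int (q j)) \<cdot>\<^sub>m G_op n Om q X) (q_set n)
            = complex_of_real cr \<cdot>\<^sub>m 1\<^sub>m (2^n)"
          unfolding qsum[OF empty_subsetI] cr_def by (simp only: empty_iff if_False foldr_ones)
        have q1: "msum (2^n) (\<lambda>q. complex_of_real (\<Prod>j\<in>J. real_of_int (q j)) \<cdot>\<^sub>m G_op n Om q X) (q_set n)
            = complex_of_real cr \<cdot>\<^sub>m ?F X"
          unfolding Bm_def[abs_def] cr_def by (rule qsum[OF Jn])
        show ?thesis unfolding q0 q1 ..
      qed
      finally show ?thesis by (simp add: smult_smult_m field_simps)
    qed
    have rhs: "mat (2^n) (2^n) (\<lambda>(a, b). \<Sum>q\<in>q_set n. \<Sum>X\<in>Pow (idx2 n). complex_of_real (p q X e) * G_op n Om q X $$ (a, b))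
       = msum (2^n) (\<lambda>X. msum (2^n) (\<lambda>q. complex_of_real (p q X e) \<cdot>\<^sub>m G_op n Om q X) (q_set n)) (Pow (idx2 n))"
    proof (rule eq_matI)
      fix a b assume "a < dim_row (msum (2^n) (\<lambda>X. msum (2^n) (\<lambda>q. complex_of_real (p q X e) \<cdot>\<^sub>m G_op n Om q X) (q_set n)) (Pow (idx2 n)))"
        "b < dim_col (msum (2^n) (\<lambda>X. msum (2^n) (\<lambda>q. complex_of_real (p q X e) \<cdot>\<^sub>m G_op n Om q X) (q_set n)) (Pow (idx2 n)))"
      then have ab: "a < 2^n" "b < 2^n" by auto
      have "\<And>q X. (complex_of_real (p q X e) \<cdot>\<^sub>m G_op n Om q X) $$ (a,b) = complex_of_real (p q X e) * G_op n Om q X $$ (a,b)"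
        using smult_entry[OF G_op_carrier ab] by blast
      then show "mat (2^n) (2^n) (\<lambda>(a, b). \<Sum>q\<in>q_set n. \<Sum>X\<in>Pow (idx2 n). complex_of_real (p q X e) * G_op n Om q X $$ (a, b)) $$ (a,b)
         = msum (2^n) (\<lambda>X. msum (2^n) (\<lambda>q. complex_of_real (p q X e) \<cdot>\<^sub>m G_op n Om q X) (q_set n)) (Pow (idx2 n)) $$ (a,b)"
        using ab by (simp add: msum_entry sum.swap[of _ "q_set n"])
    qed auto
    have outer: "msum (2^n) (\<lambda>X. complex_of_real (cr/2) \<cdot>\<^sub>m 1\<^sub>m (2^n) + complex_of_real (real_of_int e * \<sigma> * xS X S / 2 * cr) \<cdot>\<^sub>m ?F X) (Pow (idx2 n))
       = complex_of_real (1/2) \<cdot>\<^sub>m 1\<^sub>m (2^n) + complex_of_real (real_of_int e * \<sigma> / 2 * c0 * sr) \<cdot>\<^sub>m gammaS n S"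
    proof -
      define FF where "FF X = ?F X" for X
      have FFc: "\<And>X. FF X \<in> carrier_mat (2^n) (2^n)" unfolding FF_def by (rule Fc)
      have sc: "\<And>X. complex_of_real (real_of_int e * \<sigma> * xS X S / 2 * cr) \<cdot>\<^sub>m FF X =
          complex_of_real (real_of_int e * \<sigma> / 2 * cr) \<cdot>\<^sub>m (complex_of_real (xS X S) \<cdot>\<^sub>m FF X)"
        by (simp add: smult_smult_m mult.commute mult.left_commute)
      have "msum (2^n) (\<lambda>X. complex_of_real (cr/2) \<cdot>\<^sub>m 1\<^sub>m (2^n) + complex_of_real (real_of_int e * \<sigma> * xS X S / 2 * cr) \<cdot>\<^sub>m ?F X) (Pow (idx2 n))
         = msum (2^n) (\<lambda>X. complex_of_real (cr/2) \<cdot>\<^sub>m 1\<^sub>m (2^n) + complex_of_real (real_of_int e * \<sigma> / 2 * cr) \<cdot>\<^sub>m (complex_of_real (xS X S) \<cdot>\<^sub>m FF X)) (Pow (idx2 n))"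
        unfolding FF_def[symmetric] sc ..
      also have "\<dots> = msum (2^n) (\<lambda>X. complex_of_real (cr/2) \<cdot>\<^sub>m 1\<^sub>m (2^n)) (Pow (idx2 n)) +
           msum (2^n) (\<lambda>X. complex_of_real (real_of_int e * \<sigma> / 2 * cr) \<cdot>\<^sub>m (complex_of_real (xS X S) \<cdot>\<^sub>m FF X)) (Pow (idx2 n))"
        by (rule msum_add) (use FFc in auto)
      also have "msum (2^n) (\<lambda>X. complex_of_real (cr/2) \<cdot>\<^sub>m 1\<^sub>m (2^n)) (Pow (idx2 n)) =
          (\<Sum>X\<in>Pow (idx2 n). complex_of_real (cr/2)) \<cdot>\<^sub>m 1\<^sub>m (2^n)"
        by (rule msum_scalar) simp
      also have "(\<Sum>X\<in>Pow (idx2 n). complex_of_real (cr/2)) = complex_of_real (1/2)"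
        using Pcard unfolding cr_def by simp
      also have "msum (2^n) (\<lambda>X. complex_of_real (real_of_int e * \<sigma> / 2 * cr) \<cdot>\<^sub>m (complex_of_real (xS X S) \<cdot>\<^sub>m FF X)) (Pow (idx2 n))
          = complex_of_real (real_of_int e * \<sigma> / 2 * cr) \<cdot>\<^sub>m (complex_of_real (2^(2*n) * c0) \<cdot>\<^sub>m (s \<cdot>\<^sub>m gammaS n S))"
      proof -
        have m1: "msum (2^n) (\<lambda>X. complex_of_real (xS X S) \<cdot>\<^sub>m FF X) (Pow (idx2 n)) =
          complex_of_real (2^(2*n) * c0) \<cdot>\<^sub>m (s \<cdot>\<^sub>m gammaS n S)"
          unfolding FF_def Xsum c0_def s(2) ..
        have "msum (2^n) (\<lambda>X. complex_of_real (real_of_int e * \<sigma> / 2 * cr) \<cdot>\<^sub>m (complex_of_real (xS X S) \<cdot>\<^sub>m FF X)) (Pow (idx2 n))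
          = complex_of_real (real_of_int e * \<sigma> / 2 * cr) \<cdot>\<^sub>m msum (2^n) (\<lambda>X. complex_of_real (xS X S) \<cdot>\<^sub>m FF X) (Pow (idx2 n))"
          by (rule msum_smult_out) (use FFc in auto)
        then show ?thesis unfolding m1 .
      qed
      also have "\<dots> = complex_of_real (real_of_int e * \<sigma> / 2 * c0 * sr) \<cdot>\<^sub>m gammaS n S"
        unfolding s_sr cr_def by (simp add: smult_smult_m mult.assoc)
      finally show ?thesis .
    qed
    show "M_op n \<eta> S e = mat (2^n) (2^n) (\<lambda>(a, b). \<Sum>q\<in>q_set n. \<Sum>X\<in>Pow (idx2 n). complex_of_real (p q X e) * G_op n Om q X $$ (a, b))"
      unfolding rhs inner outer M_op_def \<sigma>\<eta>[symmetric]
      by (rule eq_matI) (auto simp: field_simps)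
  qed
qed

end

lemma main_part:
  fixes l n k :: nat and c :: real
    and B C :: "nat \<Rightarrow> nat set"
    and Om :: "nat \<Rightarrow> nat \<Rightarrow> real"
    and M :: "nat set set"
    and S :: "nat set"
  assumes hl: "l \<ge> 1"
    and hc: "c > 0"
    and hB: "partition_l n l B"
    and hC: "partition_l n l C"
    and hsupp: "\<forall>v\<in>idx2 n. \<forall>j\<in>idx2 n. Om v j \<noteq> 0 \<longrightarrow> (\<exists>i\<in>{1..l+1}. v \<in> B i \<and> j \<in> C i)"
    and hlow: "\<forall>i\<in>{1..l+1}. \<forall>v\<in>B i. \<forall>j\<in>C i. \<bar>Om v j\<bar> \<ge> c / sqrt (real l)"
    and hM: "perfect_matching n M"
    and hsparse: "\<forall>i\<in>{1..l+1}. \<forall>i'\<in>{1..l+1}. i \<noteq> i' \<longrightarrow>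
                    (\<exists>e\<in>M. \<exists>v\<in>e. \<exists>w\<in>e. v \<in> B i \<and> w \<in> B i')"
    and hS: "S \<in> subsets_card n (2 * k)"
    and hSC: "\<forall>s\<in>S. \<forall>s'\<in>S. s \<noteq> s' \<longrightarrow> \<not> (\<exists>i\<in>{1..l+1}. s \<in> C i \<and> s' \<in> C i)"
  shows "\<exists>\<rho>. inj_on \<rho> S \<and> (\<forall>s\<in>S. \<forall>s'\<in>S. Om (\<rho> s) s' \<noteq> 0 \<longleftrightarrow> s = s') \<and>
     (\<forall>s\<in>S. \<bar>Om (\<rho> s) s\<bar> \<ge> c / sqrt (real l)) \<and> \<rho> ` S \<subseteq> idx2 n \<and>
     (\<exists>Ms. Ms \<subseteq> M \<and> card Ms = k \<and> \<Union>Ms = \<rho> ` S)"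
proof -
  have SU: "S \<subseteq> idx2 n" "card S = 2*k" "finite S"
    using hS unfolding subsets_card_def idx2_def by (auto intro: finite_subset)
  have Bsub: "\<And>i. i \<in> {1..l+1} \<Longrightarrow> B i \<subseteq> idx2 n" using hB unfolding partition_l_def by auto
  have Bdisj: "\<And>i i' v. i \<in> {1..l+1} \<Longrightarrow> i' \<in> {1..l+1} \<Longrightarrow> v \<in> B i \<Longrightarrow> v \<in> B i' \<Longrightarrow> i = i'"
    using hB unfolding partition_l_def by blast
  have Ccov: "\<And>s. s \<in> idx2 n \<Longrightarrow> \<exists>i\<in>{1..l+1}. s \<in> C i" using hC unfolding partition_l_def by blast
  have Cdisj: "\<And>i i' v. i \<in> {1..l+1} \<Longrightarrow> i' \<in> {1..l+1} \<Longrightarrow> v \<in> C i \<Longrightarrow> v \<in> C i' \<Longrightarrow> i = i'"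
    using hC unfolding partition_l_def by blast
  have Mcard: "\<forall>e\<in>M. e \<subseteq> idx2 n \<and> card e = 2" using hM[unfolded perfect_matching_def] by (rule conjunct1)
  define bl where "bl s = (SOME i. i \<in> {1..l+1} \<and> s \<in> C i)" for s
  have bl: "\<And>s. s \<in> S \<Longrightarrow> bl s \<in> {1..l+1} \<and> s \<in> C (bl s)"
  proof -
    fix s assume "s \<in> S"
    then have "\<exists>i. i \<in> {1..l+1} \<and> s \<in> C i" using Ccov SU by blast
    then show "bl s \<in> {1..l+1} \<and> s \<in> C (bl s)" unfolding bl_def by (rule someI_ex)
  qed
  have blinj: "\<And>s s'. s \<in> S \<Longrightarrow> s' \<in> S \<Longrightarrow> bl s = bl s' \<Longrightarrow> s = s'"
    using bl hSC by metis
  define ss where "ss = sorted_list_of_set S"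
  have lss: "length ss = 2*k" and dss: "distinct ss" and sss: "set ss = S"
    unfolding ss_def using SU by auto
  have ssS: "\<And>m. m < 2*k \<Longrightarrow> ss ! m \<in> S"
  proof -
    fix m assume "m < 2*k"
    then have "ss ! m \<in> set ss" using lss by simp
    then show "ss ! m \<in> S" using sss by simp
  qed
  have ssinj: "\<And>m m'. m < 2*k \<Longrightarrow> m' < 2*k \<Longrightarrow> ss ! m = ss ! m' \<Longrightarrow> m = m'"
    using dss lss by (simp add: nth_eq_iff_index_eq)
  define VW where "VW t = (SOME vw. {fst vw, snd vw} \<in> M \<and> fst vw \<in> B (bl (ss ! (2*t))) \<and> snd vw \<in> B (bl (ss ! (2*t+1))))" for t
  have VW: "\<And>t. t < k \<Longrightarrow> {fst (VW t), snd (VW t)} \<in> M \<and> fst (VW t) \<in> B (bl (ss ! (2*t))) \<and> snd (VW t) \<in> B (bl (ss ! (2*t+1)))"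
  proof -
    fix t assume t: "t < k"
    have m1: "2*t < 2*k" "2*t+1 < 2*k" using t by auto
    let ?i = "bl (ss ! (2*t))" and ?i' = "bl (ss ! (2*t+1))"
    have ii: "?i \<in> {1..l+1}" "?i' \<in> {1..l+1}" using bl[OF ssS[OF m1(1)]] bl[OF ssS[OF m1(2)]] by simp_all
    have ne: "?i \<noteq> ?i'"
    proof
      assume "?i = ?i'"
      then have "ss ! (2*t) = ss ! (2*t+1)" using blinj[OF ssS[OF m1(1)] ssS[OF m1(2)]] by blast
      then have "2*t = 2*t+1" using ssinj[OF m1] by blast
      then show False by simp
    qed
    have ex: "\<exists>e\<in>M. \<exists>v\<in>e. \<exists>w\<in>e. v \<in> B ?i \<and> w \<in> B ?i'"
      using hsparse[rule_format, OF ii(1) ii(2) ne] .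
    then obtain e v w where e: "e \<in> M" "v \<in> e" "w \<in> e" "v \<in> B ?i" "w \<in> B ?i'"
      by blast
    have vw: "v \<noteq> w"
    proof
      assume "v = w"
      then have "?i = ?i'" using Bdisj[OF ii(1) ii(2) e(4)] e(5) by simp
      then show False using ne by simp
    qed
    have ce: "card e = 2" using Mcard e(1) by blast
    have "{v,w} \<subseteq> e" using e by auto
    moreover have "card {v,w} = card e" using vw ce by simp
    moreover have "finite e" using ce by (intro card_ge_0_finite) simp
    ultimately have "{v,w} = e" by (simp add: card_subset_eq)
    then have P: "{fst (v,w), snd (v,w)} \<in> M \<and> fst (v,w) \<in> B ?i \<and> snd (v,w) \<in> B ?i'" using e by simp
    show "{fst (VW t), snd (VW t)} \<in> M \<and> fst (VW t) \<in> B ?i \<and> snd (VW t) \<in> B ?i'"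
      unfolding VW_def by (rule someI[where P="\<lambda>vw. {fst vw, snd vw} \<in> M \<and> fst vw \<in> B ?i \<and> snd vw \<in> B ?i'", OF P])
  qed
  define pos where "pos s = pidx ss s" for s
  have pos: "\<And>s. s \<in> S \<Longrightarrow> pos s < 2*k \<and> ss ! pos s = s"
    unfolding pos_def using pidx[OF dss] sss lss by metis
  define \<rho> where "\<rho> s = (if even (pos s) then fst (VW (pos s div 2)) else snd (VW (pos s div 2)))" for s
  have \<rho>B: "\<And>s. s \<in> S \<Longrightarrow> \<rho> s \<in> B (bl s)"
  proof -
    fix s assume s: "s \<in> S"
    define m where "m = pos s"
    have m: "m < 2*k" "ss ! m = s" using pos[OF s] unfolding m_def by auto
    have t: "m div 2 < k" using m by auto
    show "\<rho> s \<in> B (bl s)"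
    proof (cases "even m")
      case True
      then have "2 * (m div 2) = m" by simp
      then show ?thesis unfolding \<rho>_def m_def[symmetric] using True VW[OF t] m by simp
    next
      case False
      then have "2 * (m div 2) + 1 = m" by simp
      then show ?thesis unfolding \<rho>_def m_def[symmetric] using False VW[OF t] m by simp
    qed
  qed
  have \<rho>U: "\<And>s. s \<in> S \<Longrightarrow> \<rho> s \<in> idx2 n" using \<rho>B bl Bsub by blast
  have inj: "inj_on \<rho> S"
  proof (rule inj_onI)
    fix s s' assume s: "s \<in> S" and s': "s' \<in> S" and e: "\<rho> s = \<rho> s'"
    have "bl s = bl s'" using Bdisj bl[OF s] bl[OF s'] \<rho>B[OF s] \<rho>B[OF s'] e by metis
    then show "s = s'" using blinj s s' by blast
  qed
  have key: "\<forall>s\<in>S. \<forall>s'\<in>S. Om (\<rho> s) s' \<noteq> 0 \<longleftrightarrow> s = s'"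
  proof (intro ballI iffI)
    fix s s' assume s: "s \<in> S" and s': "s' \<in> S" and nz: "Om (\<rho> s) s' \<noteq> 0"
    obtain i where i: "i \<in> {1..l+1}" "\<rho> s \<in> B i" "s' \<in> C i" using hsupp \<rho>U[OF s] s' SU nz by blast
    have "i = bl s" using Bdisj i \<rho>B[OF s] bl[OF s] by metis
    then show "s = s'" using hSC s s' i bl[OF s] by metis
  next
    fix s s' assume s: "s \<in> S" and s': "s' \<in> S" and eq: "s = s'"
    have "\<bar>Om (\<rho> s) s\<bar> \<ge> c / sqrt (real l)" using hlow bl[OF s] \<rho>B[OF s] by blast
    moreover have "c / sqrt (real l) > 0" using hc hl by simp
    ultimately show "Om (\<rho> s) s' \<noteq> 0" using eq by auto
  qed
  have low: "\<forall>s\<in>S. \<bar>Om (\<rho> s) s\<bar> \<ge> c / sqrt (real l)" using hlow bl \<rho>B by blast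
  define Ms where "Ms = (\<lambda>t. {fst (VW t), snd (VW t)}) ` {..<k}"
  have \<rho>ss: "\<And>m. m < 2*k \<Longrightarrow> \<rho> (ss ! m) = (if even m then fst (VW (m div 2)) else snd (VW (m div 2)))"
  proof -
    fix m assume m: "m < 2*k"
    have "pos (ss ! m) = m" using pos[OF ssS[OF m]] ssinj m by blast
    then show "\<rho> (ss ! m) = (if even m then fst (VW (m div 2)) else snd (VW (m div 2)))" unfolding \<rho>_def by simp
  qed
  have V\<rho>: "\<And>t. t < k \<Longrightarrow> fst (VW t) = \<rho> (ss ! (2*t))" using \<rho>ss by simp
  have W\<rho>: "\<And>t. t < k \<Longrightarrow> snd (VW t) = \<rho> (ss ! (2*t+1))" using \<rho>ss by simp
  have MsM: "Ms \<subseteq> M" unfolding Ms_def using VW by auto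
  have UMs: "\<Union>Ms = \<rho> ` S"
  proof
    show "\<Union>Ms \<subseteq> \<rho> ` S" unfolding Ms_def using V\<rho> W\<rho> ssS by fastforce
    show "\<rho> ` S \<subseteq> \<Union>Ms"
    proof
      fix r assume "r \<in> \<rho> ` S"
      then obtain s where s: "s \<in> S" "r = \<rho> s" by blast
      define m where "m = pos s"
      have m: "m < 2*k" "ss ! m = s" using pos[OF s(1)] unfolding m_def by auto
      have t: "m div 2 < k" using m by auto
      have "r \<in> {fst (VW (m div 2)), snd (VW (m div 2))}" using \<rho>ss[OF m(1)] m s by auto
      then show "r \<in> \<Union>Ms" unfolding Ms_def using t by blast
    qed
  qed
  have cMs: "card Ms = k"
  proof -
    have "inj_on (\<lambda>t. {fst (VW t), snd (VW t)}) {..<k}"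
    proof (rule inj_onI)
      fix t t' assume t: "t \<in> {..<k}" and t': "t' \<in> {..<k}" and e: "{fst (VW t), snd (VW t)} = {fst (VW t'), snd (VW t')}"
      have m: "2*t < 2*k" "2*t+1 < 2*k" "2*t' < 2*k" "2*t'+1 < 2*k" using t t' by auto
      have "fst (VW t) \<in> {fst (VW t'), snd (VW t')}" using e by blast
      then have "\<rho> (ss ! (2*t)) = \<rho> (ss ! (2*t')) \<or> \<rho> (ss ! (2*t)) = \<rho> (ss ! (2*t'+1))"
        using V\<rho> W\<rho> t t' by auto
      then have "ss ! (2*t) = ss ! (2*t') \<or> ss ! (2*t) = ss ! (2*t'+1)"
        using inj ssS m unfolding inj_on_def by blast
      then have "2*t = 2*t' \<or> 2*t = 2*t'+1" using ssinj m by blast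
      then show "t = t'" by presburger
    qed
    then show ?thesis unfolding Ms_def by (simp add: card_image)
  qed
  show ?thesis
    using inj key low \<rho>U MsM cMs UMs by blast
qed

lemma mono_from_rho:
  assumes fin: "finite S" and inj: "inj_on \<rho> S" and key: "\<forall>s\<in>S. \<forall>s'\<in>S. Om (\<rho> s) s' \<noteq> 0 \<longleftrightarrow> s = s'"
  shows "monomial_sub Om (\<rho> ` S) S"
  unfolding monomial_sub_def
proof (intro conjI ballI)
  show "card (\<rho> ` S) = card S" using card_image[OF inj] .
next
  fix r assume "r \<in> \<rho> ` S"
  then obtain s0 where s0: "s0 \<in> S" "r = \<rho> s0" by blast
  show "\<exists>!s. s \<in> S \<and> Om r s \<noteq> 0"
  proof (rule ex1I[of _ s0])
    show "s0 \<in> S \<and> Om r s0 \<noteq> 0" using s0 key by blast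
    fix s assume "s \<in> S \<and> Om r s \<noteq> 0"
    then show "s = s0" using s0 key by metis
  qed
next
  fix s assume s: "s \<in> S"
  show "\<exists>!r. r \<in> \<rho> ` S \<and> Om r s \<noteq> 0"
  proof (rule ex1I[of _ "\<rho> s"])
    show "\<rho> s \<in> \<rho> ` S \<and> Om (\<rho> s) s \<noteq> 0" using s key by blast
    fix r assume r: "r \<in> \<rho> ` S \<and> Om r s \<noteq> 0"
    then obtain s' where s': "s' \<in> S" "r = \<rho> s'" by blast
    then have "s' = s" using key s r by metis
    then show "r = \<rho> s" using s' by simp
  qed
qed

lemma det_bound:
  fixes Om :: "nat \<Rightarrow> nat \<Rightarrow> real"
  assumes fin: "finite S" and inj: "inj_on \<rho> S" and key: "\<forall>s\<in>S. \<forall>s'\<in>S. Om (\<rho> s) s' \<noteq> 0 \<longleftrightarrow> s = s'"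
    and low: "\<forall>s\<in>S. \<bar>Om (\<rho> s) s\<bar> \<ge> d" and d: "d \<ge> 0"
  shows "\<bar>det (submat_RS Om (\<rho> ` S) S)\<bar> \<ge> d ^ card S"
proof -
  have "d ^ card S = (\<Prod>s\<in>S. d)" by simp
  also have "\<dots> \<le> (\<Prod>s\<in>S. \<bar>Om (\<rho> s) s\<bar>)" by (rule prod_mono) (use low d in auto)
  also have "\<dots> = \<bar>det (submat_RS Om (\<rho> ` S) S)\<bar>" by (rule det_monomial[symmetric, OF fin inj key])
  finally show ?thesis .
qed

lemma pow_bound: "l \<ge> 1 \<Longrightarrow> (c / sqrt (real l)) ^ (2*k) = c ^ (2*k) / real l ^ k"
proof -
  assume "l \<ge> 1"
  have "(c / sqrt (real l)) ^ (2*k) = c ^ (2*k) / (sqrt (real l) ^ 2) ^ k"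
    by (simp add: power_divide power_mult)
  also have "sqrt (real l) ^ 2 = real l" by simp
  finally show ?thesis .
qed

theorem mainTheorem8:
  fixes l n k :: nat and c :: real
    and B C :: "nat \<Rightarrow> nat set"
    and Om :: "nat \<Rightarrow> nat \<Rightarrow> real"
    and M :: "nat set set"
    and S :: "nat set"
  assumes hl: "l \<ge> 1"
    and hn: "2 * n = l * (l + 1)"
    and hc: "c > 0"
    and hk: "k \<ge> 1" "2 * k \<le> l + 1"
    and hB: "partition_l n l B"
    and hC: "partition_l n l C"
    and hO: "orthogonal_2n n Om"
    and hsupp: "\<forall>v\<in>idx2 n. \<forall>j\<in>idx2 n. Om v j \<noteq> 0 \<longrightarrow> (\<exists>i\<in>{1..l+1}. v \<in> B i \<and> j \<in> C i)"
    and hlow: "\<forall>i\<in>{1..l+1}. \<forall>v\<in>B i. \<forall>j\<in>C i. \<bar>Om v j\<bar> \<ge> c / sqrt (real l)"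
    and hM: "perfect_matching n M"
    and hMB: "\<forall>e\<in>M. \<exists>v w i i'. e = {v, w} \<and> i \<in> {1..l+1} \<and> i' \<in> {1..l+1} \<and> i \<noteq> i'
                  \<and> v \<in> B i \<and> w \<in> B i'"
    and hsparse: "\<forall>i\<in>{1..l+1}. \<forall>i'\<in>{1..l+1}. i \<noteq> i' \<longrightarrow>
                    (\<exists>e\<in>M. \<exists>v\<in>e. \<exists>w\<in>e. v \<in> B i \<and> w \<in> B i')"
    and hS: "S \<in> subsets_card n (2 * k)"
    and hSC: "\<forall>s\<in>S. \<forall>s'\<in>S. s \<noteq> s' \<longrightarrow> \<not> (\<exists>i\<in>{1..l+1}. s \<in> C i \<and> s' \<in> C i)"
  shows "\<exists>Ms. Ms \<subseteq> M \<and> card Ms = k \<and>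
           monomial_sub Om (\<Union>Ms) S \<and>
           \<bar>det (submat_RS Om (\<Union>Ms) S)\<bar> \<ge> c ^ (2 * k) / real l ^ k \<and>
           (\<forall>\<pi>. \<pi> permutes idx2 n \<and> (\<forall>e\<in>M. \<pi> ` e \<in> D2 n) \<longrightarrow>
              \<pi> ` (\<Union>Ms) \<in> D2k n k \<and>
              (let \<eta> = \<bar>det (submat_RS (perm_rows \<pi> Om) (\<pi> ` (\<Union>Ms)) S)\<bar>
               in \<eta> \<ge> c ^ (2 * k) / real l ^ k \<and>
                  jointly_measures n (G_op n (perm_rows \<pi> Om)) (M_op n \<eta> S)))"
proof -
  obtain \<rho> Ms where inj: "inj_on \<rho> S" and key: "\<forall>s\<in>S. \<forall>s'\<in>S. Om (\<rho> s) s' \<noteq> 0 \<longleftrightarrow> s = s'"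
    and low: "\<forall>s\<in>S. \<bar>Om (\<rho> s) s\<bar> \<ge> c / sqrt (real l)" and \<rho>U: "\<rho> ` S \<subseteq> idx2 n"
    and MsM: "Ms \<subseteq> M" and cMs: "card Ms = k" and UMs: "\<Union>Ms = \<rho> ` S"
    using main_part[OF hl hc hB hC hsupp hlow hM hsparse hS hSC] by blast
  have SUm: "S \<subseteq> idx2 n" "card S = 2*k" "finite S"
    using hS unfolding subsets_card_def idx2_def by (auto intro: finite_subset)
  define d where "d = c / sqrt (real l)"
  have d0: "d \<ge> 0" unfolding d_def using hc by simp
  have bnd: "d ^ card S = c ^ (2 * k) / real l ^ k" unfolding d_def SUm(2) using pow_bound[OF hl] .
  show ?thesis
  proof (intro exI[of _ Ms] conjI allI impI)
    show "Ms \<subseteq> M" by (rule MsM)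
    show "card Ms = k" by (rule cMs)
    show "monomial_sub Om (\<Union>Ms) S" unfolding UMs by (rule mono_from_rho[OF SUm(3) inj key])
    show "\<bar>det (submat_RS Om (\<Union>Ms) S)\<bar> \<ge> c ^ (2 * k) / real l ^ k"
      unfolding UMs bnd[symmetric] by (rule det_bound[OF SUm(3) inj key low[folded d_def] d0])
  next
    fix \<pi> assume h\<pi>: "\<pi> permutes idx2 n \<and> (\<forall>e\<in>M. \<pi> ` e \<in> D2 n)"
    then have perm: "\<pi> permutes idx2 n" and D: "\<forall>e\<in>M. \<pi> ` e \<in> D2 n" by auto
    have injp: "inj \<pi>" using permutes_inj[OF perm] .
    define \<rho>' where "\<rho>' = \<pi> \<circ> \<rho>"
    define Om' where "Om' = perm_rows \<pi> Om"
    have img': "\<pi> ` (\<Union>Ms) = \<rho>' ` S" unfolding UMs \<rho>'_def by (simp add: image_comp)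
    have inj': "inj_on \<rho>' S" unfolding \<rho>'_def using inj injp by (simp add: comp_inj_on inj_on_subset)
    have Om'e: "\<And>s s'. Om' (\<rho>' s) s' = Om (\<rho> s) s'"
      unfolding Om'_def perm_rows_def \<rho>'_def using injp by (simp add: inv_into_f_f)
    have key': "\<forall>s\<in>S. \<forall>s'\<in>S. Om' (\<rho>' s) s' \<noteq> 0 \<longleftrightarrow> s = s'" using key by (simp add: Om'e)
    have low': "\<forall>s\<in>S. \<bar>Om' (\<rho>' s) s\<bar> \<ge> d" using low by (simp add: Om'e d_def)
    define F where "F = (\<lambda>e. \<pi> ` e) ` Ms"
    have FD: "F \<subseteq> D2 n" unfolding F_def using D MsM by auto
    have cF: "card F = k"
    proof -
      have "inj_on (\<lambda>e. \<pi> ` e) Ms" using injp by (simp add: inj_on_def inj_image_eq_iff)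
      then show ?thesis unfolding F_def using cMs by (simp add: card_image)
    qed
    have UF: "\<Union>F = \<pi> ` (\<Union>Ms)" unfolding F_def by (simp add: image_Union)
    show "\<pi> ` (\<Union>Ms) \<in> D2k n k" unfolding D2k_def mem_Collect_eq
      by (intro exI[of _ F]) (use FD cF UF in simp)
    define J where "J = {j\<in>{1..n}. {2*j-1, 2*j} \<in> F}"
    have FJ: "F = (\<lambda>j. {2*j-1, 2*j}) ` J"
    proof
      show "F \<subseteq> (\<lambda>j. {2*j-1, 2*j}) ` J"
      proof
        fix e assume e: "e \<in> F"
        have "e \<in> D2 n" using FD e by (rule subsetD)
        then obtain j where j: "j \<in> {1..n}" "e = {2*j-1, 2*j}" unfolding D2_def by auto
        then show "e \<in> (\<lambda>j. {2*j-1, 2*j}) ` J" unfolding J_def using e by blast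
      qed
      show "(\<lambda>j. {2*j-1, 2*j}) ` J \<subseteq> F" unfolding J_def by blast
    qed
    have Jn: "J \<subseteq> {1..n}" unfolding J_def by blast
    have cJ: "card J = k"
    proof -
      have "inj_on (\<lambda>j. {2*j-1, 2*(j::nat)}) J"
      proof (rule inj_onI)
        fix j j' assume j: "j \<in> J" and j': "j' \<in> J" and e: "{2*j-1, 2*j} = {2*j'-1, 2*(j'::nat)}"
        have "j \<ge> 1" "j' \<ge> 1" using j j' Jn by auto
        moreover have "2*j \<in> {2*j'-1, 2*j'}" using e by blast
        ultimately show "j = j'" by auto
      qed
      then have "card F = card J" unfolding FJ by (simp add: card_image)
      then show ?thesis using cF by simp
    qed
    have imgJ: "\<rho>' ` S = (\<Union>j\<in>J. {2*j-1, 2*j})" using UF FJ img' by auto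
    interpret jm n k Om' J S \<rho>'
      by unfold_locales (use Jn cJ hS inj' imgJ key' in auto)
    have jmeas: "jointly_measures n (G_op n Om') (M_op n \<bar>det (submat_RS Om' (\<rho>' ` S) S)\<bar> S)"
      by (rule jm_jointly)
    have dbound: "\<bar>det (submat_RS Om' (\<rho>' ` S) S)\<bar> \<ge> c ^ (2 * k) / real l ^ k"
      unfolding bnd[symmetric] by (rule det_bound[OF SUm(3) inj' key' low' d0])
    show "let \<eta> = \<bar>det (submat_RS (perm_rows \<pi> Om) (\<pi> ` (\<Union>Ms)) S)\<bar>
               in \<eta> \<ge> c ^ (2 * k) / real l ^ k \<and>
                  jointly_measures n (G_op n (perm_rows \<pi> Om)) (M_op n \<eta> S)"
      unfolding Let_def img' Om'_def[symmetric] using jmeas dbound by simp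
  qed
qed

end
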